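(* Let $\Phi(x)=\tanh x$, let $0<\nu\ll1$ and let $T_\nu>0$ satisfy $1-\Phi(T_\nu)=\nu$. For $0<\epsilon,\nu\ll1$, at time $T_\nu$ the image under the flow of the system below of the curve $\Sigma_o^p=\{(r,s,\psi):r=\psi=0\}$ (near the point of the $\epsilon=0$ hole orbit at $x=0$) lies within an $O(\nu)$ distance of the slow manifold $\mathcal M_\epsilon^+$, and the $\psi$-coordinates of points on this image are \[ \psi=\Big[\frac23\Big(d_1+d_3+\frac85d_4\Big)+O(\nu)\Big]\epsilon+O(\epsilon+\sigma)\epsilon . \]
   Context: Consider, for real parameters $d_1,d_3,d_4$, small $\epsilon>0$, a small parameter $\sigma$ independent of $\epsilon$ and a function $\sigma^*(\epsilon)$, the system \[ r'=s,\quad s'=-2r(1-r^2)+r\psi^2+2\epsilon^2d_1r\big[(d_1+d_3)(1-r^2)+d_4(1-r^4)+\epsilon^2\sigma^*+\sigma\big], \] \[ \psi'=-2\frac{s}{r}\psi+2\epsilon\big[(d_1+d_3)(1-r^2)+d_4(1-r^4)+\epsilon^2\sigma^*+\sigma\big], \] which describes steady states $\phi=re^{i\int_0^x\psi}$, $s=r'$, of the perturbed NLS / complex Ginzburg–Landau equation with $d_2+d_3+d_4=-(\epsilon^2\sigma^*+\sigma)$. For $\epsilon=0$ the hole solution $(r,s,\psi)=(\Phi,\Phi',0)$ lies on $\Sigma_o^p$ at $x=0$ (with $s(0)=1$) and tends to the curve of equilibria $\mathcal M_0^+=\{s=0,\ r=\sqrt{1-\psi^2/2},\ \psi^2<2/3\}$;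 $\mathcal M_\epsilon^+$ denotes the normally hyperbolic slow manifold which perturbs $\mathcal M_0^+$ for small $\epsilon$. *)

theory Defs
  imports "HOL-Analysis.Analysis"
begin

text \<open>The common bracket
  (d1+d3)(1-r^2) + d4(1-r^4) + eps^2 sigma* + sigma,
  where sst stands for the value sigma*(eps).\<close>
definition bracket :: "real \<Rightarrow> real \<Rightarrow> real \<Rightarrow> real \<Rightarrow> real \<Rightarrow> real \<Rightarrow> real \<Rightarrow> real" where
  "bracket d1 d3 d4 sst eps sig r =
     (d1 + d3) * (1 - r^2) + d4 * (1 - r^4) + eps^2 * sst + sig"

definition hole_sys_sol ::
  "real \<Rightarrow> real \<Rightarrow> real \<Rightarrow> real \<Rightarrow> real \<Rightarrow> real \<Rightarrow> real set
     \<Rightarrow> (real \<Rightarrow> real) \<Rightarrow> (real \<Rightarrow> real) \<Rightarrow> (real \<Rightarrow> real) \<Rightarrow> bool" where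
  "hole_sys_sol d1 d3 d4 sst eps sig J r s psi \<longleftrightarrow>
     (\<forall>x\<in>J. r x \<noteq> 0 \<and>
        (r has_real_derivative s x) (at x within J) \<and>
        (s has_real_derivative
            (- 2 * r x * (1 - (r x)^2) + r x * (psi x)^2
             + 2 * eps^2 * d1 * r x * bracket d1 d3 d4 sst eps sig (r x))) (at x within J) \<and>
        (psi has_real_derivative
            (- 2 * (s x / r x) * psi x + 2 * eps * bracket d1 d3 d4 sst eps sig (r x))) (at x within J))"

definition orbit_from_Sigma ::
  "real \<Rightarrow> real \<Rightarrow> real \<Rightarrow> real \<Rightarrow> real \<Rightarrow> real \<Rightarrow> real \<Rightarrow> real
     \<Rightarrow> (real \<Rightarrow> real) \<Rightarrow> (real \<Rightarrow> real) \<Rightarrow> (real \<Rightarrow> real) \<Rightarrow> bool" where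
  "orbit_from_Sigma d1 d3 d4 sst eps sig s0 T r s psi \<longleftrightarrow>
     continuous_on {0..T} r \<and> continuous_on {0..T} s \<and> continuous_on {0..T} psi \<and>
     r 0 = 0 \<and> s 0 = s0 \<and> psi 0 = 0 \<and>
     hole_sys_sol d1 d3 d4 sst eps sig {0<..T} r s psi"

text \<open>M is a family of slow manifolds M_eps^+ (indexed by eps and sigma, for
  0 < eps < e0 and |sigma| < s0): each M eps sig is a continuous curve given as a graph
  over psi in [-a,a] (a^2 < 2/3), K*eps-close to M_0^+ = {s=0, r = sqrt(1-psi^2/2)},
  and locally invariant under the flow of the system.\<close>
definition slow_manifold_family ::
  "real \<Rightarrow> real \<Rightarrow> real \<Rightarrow> (real \<Rightarrow> real) \<Rightarrow> real \<Rightarrow> real \<Rightarrow> real \<Rightarrow> real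
     \<Rightarrow> (real \<Rightarrow> real \<Rightarrow> (real \<times> real \<times> real) set) \<Rightarrow> bool" where
  "slow_manifold_family d1 d3 d4 sigst e0 sg0 K a M \<longleftrightarrow>
     0 < e0 \<and> 0 < sg0 \<and> 0 < a \<and> a^2 < 2/3 \<and>
     (\<forall>eps\<in>{0<..<e0}. \<forall>sig. \<bar>sig\<bar> < sg0 \<longrightarrow>
        (\<exists>h :: real \<Rightarrow> real \<times> real.
           continuous_on {-a..a} h \<and>
           M eps sig = (\<lambda>p. (fst (h p), snd (h p), p)) ` {-a..a} \<and>
           (\<forall>p\<in>{-a..a}. dist (h p) (sqrt (1 - p^2 / 2), 0) \<le> K * eps)) \<and>
        (\<forall>q\<in>M eps sig. \<bar>snd (snd q)\<bar> < a \<longrightarrow>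
           (\<exists>\<tau>>0. \<exists>r s psi.
              hole_sys_sol d1 d3 d4 (sigst eps) eps sig {-\<tau>..\<tau>} r s psi \<and>
              (r 0, s 0, psi 0) = q \<and>
              (\<forall>t\<in>{-\<tau>..\<tau>}. (r t, s t, psi t) \<in> M eps sig))))"

end

theory Submission
  imports Defs
begin

lemma gronwall_simple:
  fixes f f' :: "real \<Rightarrow> real"
  assumes t: "0 \<le> t" and cont: "continuous_on {0..t} f"
    and der: "\<And>x. x \<in> {0<..<t} \<Longrightarrow> (f has_real_derivative f' x) (at x)"
    and bd: "\<And>x. x \<in> {0<..<t} \<Longrightarrow> f' x \<le> k * f x + c"
    and c: "0 \<le> c" and k: "0 \<le> k"
  shows "f t \<le> (f 0 + c * t) * exp (k * t)"
proof -
  define g where "g u = f u * exp (- k * u) - c * u" for u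
  have "g t \<le> g 0"
  proof (rule DERIV_nonpos_imp_decreasing_open[OF t])
    fix x assume x: "0 < x" "x < t"
    have d: "(g has_real_derivative (f' x * exp (- k * x) + f x * (exp (- k * x) * (- k)) - c)) (at x)"
      unfolding g_def
      by (auto intro!: derivative_eq_intros der x)
    have e1: "exp (- k * x) \<le> 1" using k x by simp
    have e0: "0 < exp (- k * x)" by simp
    have "f' x * exp (- k * x) \<le> (k * f x + c) * exp (- k * x)"
      using bd[of x] x e0 by (intro mult_right_mono) auto
    also have "\<dots> = k * f x * exp (- k * x) + c * exp (- k * x)" by (simp add: algebra_simps)
    also have "\<dots> \<le> k * f x * exp (- k * x) + c" using c e1
      by (simp add: mult_left_le)
    finally have "f' x * exp (- k * x) + f x * (exp (- k * x) * (- k)) - c \<le> 0"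
      by (simp add: algebra_simps)
    then show "\<exists>y. (g has_real_derivative y) (at x) \<and> y \<le> 0" using d by blast
  next
    show "continuous_on {0..t} g" unfolding g_def
      by (intro continuous_intros cont)
  qed
  then have "f t * exp (- k * t) \<le> f 0 + c * t" unfolding g_def by simp
  then have "f t * exp (- k * t) * exp (k * t) \<le> (f 0 + c * t) * exp (k * t)"
    by (intro mult_right_mono) auto
  moreover have "f t * exp (- k * t) * exp (k * t) = f t"
    by (simp add: mult.assoc flip: exp_add)
  ultimately show ?thesis by linarith
qed

lemma cube_lip:
  fixes r \<tau> R :: real
  assumes "\<bar>r\<bar> \<le> R" "\<bar>\<tau>\<bar> \<le> R"
  shows "\<bar>r^3 - \<tau>^3\<bar> \<le> 3 * R^2 * \<bar>r - \<tau>\<bar>"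
proof -
  have e: "r^3 - \<tau>^3 = (r - \<tau>) * (r^2 + r*\<tau> + \<tau>^2)" by (simp add: power2_eq_square power3_eq_cube algebra_simps)
  have "\<bar>r^2 + r*\<tau> + \<tau>^2\<bar> \<le> \<bar>r\<bar>^2 + \<bar>r\<bar>*\<bar>\<tau>\<bar> + \<bar>\<tau>\<bar>^2"
    by (metis (no_types, lifting) abs_mult abs_triangle_ineq add_mono power2_abs abs_power2 order_trans order.refl)
  also have "\<dots> \<le> R^2 + R*R + R^2" using assms
    by (intro add_mono mult_mono power_mono) auto
  finally have "\<bar>r^2 + r*\<tau> + \<tau>^2\<bar> \<le> 3 * R^2" by (simp add: power2_eq_square)
  then show ?thesis unfolding e abs_mult
    by (simp add: mult.commute mult_left_mono)
qed

lemma tri2: "\<bar>- 2 * u + 2 * v\<bar> \<le> 2 * \<bar>u\<bar> + 2 * \<bar>v::real\<bar>" by arith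

lemma prod_bd: "\<bar>y\<bar> \<le> B \<Longrightarrow> 2 * a * y \<le> 2 * \<bar>a\<bar> * (B::real)"
proof -
  assume h: "\<bar>y\<bar> \<le> B"
  have "a * y \<le> \<bar>a\<bar> * \<bar>y\<bar>" by (metis abs_ge_self abs_mult)
  also have "\<dots> \<le> \<bar>a\<bar> * B" using h by (intro mult_left_mono) auto
  finally show ?thesis by simp
qed

lemma amgm2: "2 * \<bar>a\<bar> * \<bar>b\<bar> \<le> a^2 + (b::real)^2"
proof -
  have "0 \<le> (\<bar>a\<bar> - \<bar>b\<bar>)^2" by simp
  then show ?thesis by (simp add: power2_eq_square algebra_simps)
qed

lemma lin4: "x \<le> a2 + b2 \<Longrightarrow> p \<le> q \<Longrightarrow> v \<le> b2 + c2 \<Longrightarrow> 0 \<le> (a2::real) \<Longrightarrow> x + p + v \<le> 2*(a2+b2) + q + c2"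
  by simp

lemma cosh_real_ne0 [simp]: "cosh (x::real) \<noteq> 0"
  by (metis cosh_real_pos less_irrefl)

lemma tanh_sq_deriv:
  "((\<lambda>x. 1 - tanh x ^ 2) has_real_derivative (- 2 * tanh x * (1 - tanh x ^ 2))) (at (x::real))"
  by (auto intro!: derivative_eq_intros simp: power2_eq_square algebra_simps)

lemma core_cmp:
  fixes r s \<sigma> q :: "real \<Rightarrow> real"
  assumes t: "0 \<le> t" and cr: "continuous_on {0..t} r" and cs: "continuous_on {0..t} s"
    and r0: "r 0 = 0" and s0: "s 0 = s0"
    and dr: "\<And>x. x \<in> {0<..<t} \<Longrightarrow> (r has_real_derivative \<sigma> x) (at x)"
    and ds: "\<And>x. x \<in> {0<..<t} \<Longrightarrow> (s has_real_derivative (- 2 * r x * (1 - r x ^ 2) + q x)) (at x)"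
    and sg: "\<And>x. x \<in> {0<..<t} \<Longrightarrow> \<bar>\<sigma> x - (1 - tanh x ^ 2)\<bar> \<le> \<bar>s x - (1 - tanh x ^ 2)\<bar>"
    and qb: "\<And>x. x \<in> {0<..<t} \<Longrightarrow> \<bar>q x\<bar> \<le> c"
    and rb: "\<And>x. x \<in> {0<..<t} \<Longrightarrow> \<bar>r x\<bar> \<le> R"
    and R: "1 \<le> R" and c: "0 \<le> c"
  shows "(r t - tanh t)^2 + (s t - (1 - tanh t ^ 2))^2 \<le> ((s0 - 1)^2 + c^2 * t) * exp ((4 + 6 * R^2) * t)"
proof -
  define E where "E u = (r u - tanh u)^2 + (s u - (1 - tanh u ^ 2))^2" for u
  define E' where "E' u = 2 * (r u - tanh u) * (\<sigma> u - (1 - tanh u ^ 2))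
     + 2 * (s u - (1 - tanh u ^ 2)) * ((- 2 * r u * (1 - r u ^ 2) + q u) - (- 2 * tanh u * (1 - tanh u ^ 2)))" for u
  have "E t \<le> (E 0 + c^2 * t) * exp ((4 + 6 * R^2) * t)"
  proof (rule gronwall_simple[OF t, where f' = E'])
    show "continuous_on {0..t} E" unfolding E_def
      by (intro continuous_intros cr cs) auto
  next
    fix x assume x: "x \<in> {0<..<t}"
    show "(E has_real_derivative E' x) (at x)" unfolding E_def E'_def
      by (rule derivative_eq_intros dr[OF x] ds[OF x] tanh_sq_deriv refl | simp)+
         (simp add: algebra_simps power2_eq_square)
  next
    fix x assume x: "x \<in> {0<..<t}"
    define a where "a = r x - tanh x"
    define b where "b = s x - (1 - tanh x ^ 2)"
    have ta: "\<bar>tanh x\<bar> \<le> R" using R tanh_real_bounds[of x] by auto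
    have h1: "\<bar>\<sigma> x - (1 - tanh x ^ 2)\<bar> \<le> \<bar>b\<bar>" using sg[OF x] b_def by simp
    have "\<bar>(- 2 * r x * (1 - r x ^ 2)) - (- 2 * tanh x * (1 - tanh x ^ 2))\<bar>
          = \<bar>-2 * a + 2 * (r x ^ 3 - tanh x ^ 3)\<bar>" unfolding a_def by (simp add: algebra_simps power2_eq_square power3_eq_cube)
    also have "\<dots> \<le> 2 * \<bar>a\<bar> + 2 * \<bar>r x ^ 3 - tanh x ^ 3\<bar>"
      by (rule tri2)
    also have "\<dots> \<le> 2 * \<bar>a\<bar> + 2 * (3 * R^2 * \<bar>a\<bar>)"
      using cube_lip[OF rb[OF x] ta] a_def by simp
    finally have h2: "\<bar>(- 2 * r x * (1 - r x ^ 2) + q x) - (- 2 * tanh x * (1 - tanh x ^ 2))\<bar>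
       \<le> (2 + 6 * R^2) * \<bar>a\<bar> + c" using qb[OF x] by (simp add: algebra_simps)
    have "E' x \<le> 2 * \<bar>a\<bar> * \<bar>b\<bar> + 2 * \<bar>b\<bar> * ((2 + 6 * R^2) * \<bar>a\<bar> + c)"
    proof -
      have "2 * a * (\<sigma> x - (1 - tanh x ^ 2)) \<le> 2 * \<bar>a\<bar> * \<bar>b\<bar>"
        using h1 by (rule prod_bd)
      moreover have "2 * b * ((- 2 * r x * (1 - r x ^ 2) + q x) - (- 2 * tanh x * (1 - tanh x ^ 2)))
            \<le> 2 * \<bar>b\<bar> * ((2 + 6 * R^2) * \<bar>a\<bar> + c)"
        using h2 by (rule prod_bd)
      ultimately show ?thesis unfolding E'_def a_def b_def by linarith
    qed
    also have "\<dots> \<le> (4 + 6 * R^2) * (a^2 + b^2) + c^2"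
    proof -
      have i1: "2 * \<bar>a\<bar> * \<bar>b\<bar> \<le> a^2 + b^2" by (rule amgm2)
      have i2: "2 * \<bar>b\<bar> * c \<le> b^2 + c^2" using amgm2[of b c] c by simp
      have i3: "(2 + 6 * R^2) * (2 * \<bar>a\<bar> * \<bar>b\<bar>) \<le> (2 + 6 * R^2) * (a^2 + b^2)"
        using i1 by (intro mult_left_mono) auto
      have e1: "2 * \<bar>a\<bar> * \<bar>b\<bar> + 2 * \<bar>b\<bar> * ((2 + 6 * R^2) * \<bar>a\<bar> + c)
          = 2 * \<bar>a\<bar> * \<bar>b\<bar> + (2 + 6 * R^2) * (2 * \<bar>a\<bar> * \<bar>b\<bar>) + 2 * \<bar>b\<bar> * c"
        by (simp add: algebra_simps)
      have e2: "(4 + 6 * R^2) * (a^2 + b^2) + c^2 = 2 * (a^2 + b^2) + (2 + 6 * R^2) * (a^2 + b^2) + c^2"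
        by (simp add: algebra_simps)
      have "0 \<le> a^2" by simp
      then show ?thesis unfolding e1 e2 by (rule lin4[OF i1 i3 i2])
    qed
    finally show "E' x \<le> (4 + 6 * R^2) * E x + c^2" unfolding E_def a_def b_def .
  qed (use c in auto)
  then show ?thesis unfolding E_def using r0 s0 by simp
qed

definition clv :: "real \<Rightarrow> real \<Rightarrow> real \<Rightarrow> real" where
  "clv m M y = max m (min M y)"

lemma clv_bds: "m \<le> M \<Longrightarrow> m \<le> clv m M y \<and> clv m M y \<le> M"
  unfolding clv_def by auto

lemma clv_lip: "m \<le> M \<Longrightarrow> \<bar>clv m M y - clv m M z\<bar> \<le> \<bar>y - z\<bar>"
  unfolding clv_def by (auto simp: max_def min_def)

lemma clv_id: "m \<le> y \<Longrightarrow> y \<le> M \<Longrightarrow> clv m M y = y"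
  unfolding clv_def by auto

lemma continuous_on_clv [continuous_intros]:
  "continuous_on S f \<Longrightarrow> continuous_on S (\<lambda>x. clv m M (f x))"
  unfolding clv_def by (intro continuous_intros)

definition rr :: "real \<Rightarrow> real \<Rightarrow> (real \<Rightarrow> real) \<Rightarrow> real \<Rightarrow> real" where
  "rr m M s t = integral {0..t} (\<lambda>u. clv m M (s u))"

lemma cont_sub: "continuous_on {0..T} f \<Longrightarrow> t \<le> (T::real) \<Longrightarrow> continuous_on {0..t} f"
  by (rule continuous_on_subset) auto

lemma int_sub: "continuous_on {0..T} (f::real\<Rightarrow>real) \<Longrightarrow> t \<le> (T::real) \<Longrightarrow> f integrable_on {0..t}"
  by (rule integrable_continuous_real, rule cont_sub)

lemma rr_cont: "continuous_on {0..T} s \<Longrightarrow> continuous_on {0..T} (rr m M s)"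
  unfolding rr_def
  by (intro indefinite_integral_continuous_1 integrable_continuous_real continuous_intros)

lemma rr_deriv: "continuous_on {0..T} s \<Longrightarrow> x \<in> {0..T} \<Longrightarrow>
   (rr m M s has_real_derivative clv m M (s x)) (at x within {0..T})"
  unfolding rr_def has_real_derivative_iff_has_vector_derivative
  by (intro integral_has_vector_derivative continuous_intros) auto

lemma rr_0 [simp]: "rr m M s 0 = 0"
  unfolding rr_def by simp

lemma rr_bds:
  assumes "continuous_on {0..T} s" "t \<in> {0..T}" "m \<le> M"
  shows "m * t \<le> rr m M s t \<and> rr m M s t \<le> M * t"
proof -
  have i: "(\<lambda>u. clv m M (s u)) integrable_on {0..t}"
    using assms by (intro int_sub[of T] continuous_intros) auto
  have "integral {0..t} (\<lambda>u. m) \<le> rr m M s t" unfolding rr_def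
    using i clv_bds[OF assms(3)] by (intro integral_le) auto
  moreover have "rr m M s t \<le> integral {0..t} (\<lambda>u. M)" unfolding rr_def
    using i clv_bds[OF assms(3)] by (intro integral_le) auto
  ultimately show ?thesis using assms by (simp add: mult.commute)
qed

lemma rr_lip:
  assumes c1: "continuous_on {0..T} s1" and c2: "continuous_on {0..T} s2" and t: "t \<in> {0..T}" and mM: "m \<le> M"
    and D: "\<forall>v\<in>{0..t}. \<bar>s1 v - s2 v\<bar> \<le> D"
  shows "\<bar>rr m M s1 t - rr m M s2 t\<bar> \<le> D * t"
proof -
  have tT: "t \<le> T" using t by simp
  have c: "continuous_on {0..t} (\<lambda>u. clv m M (s1 u) - clv m M (s2 u))"
    using cont_sub[OF c1 tT] cont_sub[OF c2 tT] by (intro continuous_intros)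
  have i1: "(\<lambda>u. clv m M (s1 u)) integrable_on {0..t}"
    using cont_sub[OF c1 tT] by (intro integrable_continuous_real continuous_intros)
  have i2: "(\<lambda>u. clv m M (s2 u)) integrable_on {0..t}"
    using cont_sub[OF c2 tT] by (intro integrable_continuous_real continuous_intros)
  have "rr m M s1 t - rr m M s2 t = integral {0..t} (\<lambda>u. clv m M (s1 u) - clv m M (s2 u))"
    unfolding rr_def using integral_diff[OF i1 i2] by simp
  also have "\<bar>\<dots>\<bar> \<le> D * (t - 0)"
  proof -
    have "\<And>u. u \<in> {0..t} \<Longrightarrow> norm (clv m M (s1 u) - clv m M (s2 u)) \<le> D"
      using order_trans[OF clv_lip[OF mM] D[rule_format]] by simp
    then show ?thesis using integral_bound[OF _ c, of D] t by simp
  qed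
  finally show ?thesis by simp
qed


lemma lip_prod:
  fixes a1 a2 b1 b2 :: real
  assumes "\<bar>a1 - a2\<bar> \<le> A" "\<bar>b1 - b2\<bar> \<le> B" "\<bar>b1\<bar> \<le> Kb" "\<bar>a2\<bar> \<le> Ka"
  shows "\<bar>a1 * b1 - a2 * b2\<bar> \<le> A * Kb + Ka * B"
proof -
  have e: "a1 * b1 - a2 * b2 = (a1 - a2) * b1 + a2 * (b1 - b2)" by (simp add: algebra_simps)
  have "\<bar>(a1 - a2) * b1\<bar> \<le> A * Kb" unfolding abs_mult using assms
    by (intro mult_mono) auto
  moreover have "\<bar>a2 * (b1 - b2)\<bar> \<le> Ka * B" unfolding abs_mult using assms
    by (intro mult_mono) auto
  ultimately show ?thesis unfolding e by (meson abs_triangle_ineq add_mono order_trans)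
qed

lemma tri4: "\<bar>(-2) * a + 2 * b + c + x\<bar> \<le> 2 * \<bar>a\<bar> + 2 * \<bar>b\<bar> + \<bar>c\<bar> + \<bar>x::real\<bar>"
  by arith

lemma cont_compose_univ:
  "continuous_on UNIV (g::real\<Rightarrow>real) \<Longrightarrow> continuous_on S f \<Longrightarrow> continuous_on S (\<lambda>x. g (f x))"
  by (rule continuous_on_compose2[of UNIV g S f]) auto

definition II :: "real \<Rightarrow> real \<Rightarrow> (real \<Rightarrow> real) \<Rightarrow> (real \<Rightarrow> real) \<Rightarrow> real \<Rightarrow> real" where
  "II m M \<beta> s t = integral {0..t} (\<lambda>u. (rr m M s u)^2 * \<beta> (rr m M s u))"

definition PP :: "real \<Rightarrow> real \<Rightarrow> (real \<Rightarrow> real) \<Rightarrow> real \<Rightarrow> (real \<Rightarrow> real) \<Rightarrow> real \<Rightarrow> real" where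
  "PP m M \<beta> eps s t = 2 * eps * II m M \<beta> s t / (rr m M s t)^2"

definition GG :: "real \<Rightarrow> real \<Rightarrow> (real \<Rightarrow> real) \<Rightarrow> real \<Rightarrow> real \<Rightarrow> (real \<Rightarrow> real) \<Rightarrow> real \<Rightarrow> real" where
  "GG m M \<beta> eps e2 s t = - 2 * rr m M s t * (1 - (rr m M s t)^2) + rr m M s t * (PP m M \<beta> eps s t)^2
     + e2 * rr m M s t * \<beta> (rr m M s t)"

context
  fixes \<beta> :: "real \<Rightarrow> real" and m M T Bm LB :: real
  assumes c\<beta>: "continuous_on UNIV \<beta>" and mpos: "0 < m" and mM: "m \<le> M" and Tpos: "0 < T"
    and Bm: "\<And>x. \<bar>x\<bar> \<le> M * T \<Longrightarrow> \<bar>\<beta> x\<bar> \<le> Bm"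
    and LB: "\<And>x y. \<bar>x\<bar> \<le> M * T \<Longrightarrow> \<bar>y\<bar> \<le> M * T \<Longrightarrow> \<bar>\<beta> x - \<beta> y\<bar> \<le> LB * \<bar>x - y\<bar>"
begin

lemma Bm_nonneg: "0 \<le> Bm"
  using Bm[of 0] mpos mM Tpos by (smt (verit) mult_pos_pos)

lemma LB_nonneg: "0 \<le> LB"
proof -
  have "0 \<le> LB * \<bar>0 - (M*T)\<bar>" using LB[of 0 "M*T"] mpos mM Tpos
    by (smt (verit) abs_ge_zero mult_pos_pos)
  moreover have "0 < \<bar>0 - (M*T)\<bar>" using mpos mM Tpos by simp
  ultimately show ?thesis by (simp add: zero_le_mult_iff)
qed

lemma rr_abs:
  assumes "continuous_on {0..T} s" "t \<in> {0..T}"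
  shows "\<bar>rr m M s t\<bar> \<le> M * t" "\<bar>rr m M s t\<bar> \<le> M * T" "m * t \<le> rr m M s t"
proof -
  have b: "m * t \<le> rr m M s t \<and> rr m M s t \<le> M * t" by (rule rr_bds[OF assms mM])
  moreover have "0 \<le> m * t" using mpos assms(2) by simp
  ultimately show 1: "\<bar>rr m M s t\<bar> \<le> M * t" by simp
  have "M * t \<le> M * T" using assms(2) mpos mM by (intro mult_left_mono) auto
  then show "\<bar>rr m M s t\<bar> \<le> M * T" using 1 by simp
  show "m * t \<le> rr m M s t" using b by simp
qed

lemma q_cont: "continuous_on {0..T} s \<Longrightarrow> continuous_on {0..T} (\<lambda>u. (rr m M s u)^2 * \<beta> (rr m M s u))"
  by (intro continuous_intros rr_cont cont_compose_univ[OF c\<beta>])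

lemma II_cont: "continuous_on {0..T} s \<Longrightarrow> continuous_on {0..T} (II m M \<beta> s)"
  unfolding II_def by (intro indefinite_integral_continuous_1 integrable_continuous_real q_cont)

lemma II_0 [simp]: "II m M \<beta> s 0 = 0" unfolding II_def by simp

lemma II_bd:
  assumes cs: "continuous_on {0..T} s" and t: "t \<in> {0..T}"
  shows "\<bar>II m M \<beta> s t\<bar> \<le> (M * t)^2 * Bm * t"
proof -
  have tT: "t \<le> T" using t by simp
  have "\<And>u. u \<in> {0..t} \<Longrightarrow> norm ((rr m M s u)^2 * \<beta> (rr m M s u)) \<le> (M * t)^2 * Bm"
  proof -
    fix u assume u: "u \<in> {0..t}"
    then have uT: "u \<in> {0..T}" using tT by simp
    have "\<bar>rr m M s u\<bar> \<le> M * u" using rr_abs(1)[OF cs uT] .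
    also have "\<dots> \<le> M * t" using u mpos mM by (intro mult_left_mono) auto
    finally have a: "\<bar>rr m M s u\<bar> \<le> M * t" .
    have "\<bar>rr m M s u\<bar>^2 \<le> (M * t)^2" using a by (intro power_mono) auto
    moreover have "\<bar>\<beta> (rr m M s u)\<bar> \<le> Bm" using Bm rr_abs(2)[OF cs uT] by blast
    ultimately show "norm ((rr m M s u)^2 * \<beta> (rr m M s u)) \<le> (M * t)^2 * Bm"
      by (simp add: abs_mult mult_mono)
  qed
  then have "norm (II m M \<beta> s t) \<le> (M * t)^2 * Bm * (t - 0)" unfolding II_def
    using t by (intro integral_bound cont_sub[OF q_cont[OF cs] tT]) auto
  then show ?thesis by simp
qed

definition Lq where "Lq = 2 * (M * T) * Bm + (M * T)^2 * LB"

lemma Lq_nonneg: "0 \<le> Lq"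
  unfolding Lq_def using Bm_nonneg LB_nonneg mpos mM Tpos by simp

lemma q_lip:
  assumes "\<bar>x\<bar> \<le> M * T" "\<bar>y\<bar> \<le> M * T"
  shows "\<bar>x^2 * \<beta> x - y^2 * \<beta> y\<bar> \<le> Lq * \<bar>x - y\<bar>"
proof -
  have "\<bar>x^2 - y^2\<bar> = \<bar>x - y\<bar> * \<bar>x + y\<bar>" by (simp add: power2_eq_square algebra_simps flip: abs_mult)
  also have "\<dots> \<le> \<bar>x - y\<bar> * (2 * (M * T))" using assms by (intro mult_left_mono) auto
  finally have a: "\<bar>x^2 - y^2\<bar> \<le> \<bar>x - y\<bar> * (2 * (M * T))" .
  have b: "\<bar>\<beta> x - \<beta> y\<bar> \<le> LB * \<bar>x - y\<bar>" using LB assms by blast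
  have c: "\<bar>\<beta> x\<bar> \<le> Bm" using Bm assms by blast
  have "\<bar>y\<bar>^2 \<le> (M * T)^2" by (rule power_mono[OF assms(2)]) simp
  then have d: "\<bar>y^2\<bar> \<le> (M * T)^2" by simp
  have "\<bar>x^2 * \<beta> x - y^2 * \<beta> y\<bar> \<le> \<bar>x - y\<bar> * (2 * (M * T)) * Bm + (M * T)^2 * (LB * \<bar>x - y\<bar>)"
    by (rule lip_prod[OF a b c d])
  also have "\<dots> = Lq * \<bar>x - y\<bar>" unfolding Lq_def by (simp add: algebra_simps)
  finally show ?thesis .
qed

lemma II_lip:
  assumes c1: "continuous_on {0..T} s1" and c2: "continuous_on {0..T} s2" and t: "t \<in> {0..T}"
    and D: "\<forall>v\<in>{0..t}. \<bar>s1 v - s2 v\<bar> \<le> D"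
  shows "\<bar>II m M \<beta> s1 t - II m M \<beta> s2 t\<bar> \<le> Lq * D * t * t"
proof -
  have tT: "t \<le> T" using t by simp
  have D0: "0 \<le> D" using D t by force
  let ?f = "\<lambda>u. (rr m M s1 u)^2 * \<beta> (rr m M s1 u) - (rr m M s2 u)^2 * \<beta> (rr m M s2 u)"
  have i1: "(\<lambda>u. (rr m M s1 u)^2 * \<beta> (rr m M s1 u)) integrable_on {0..t}"
    by (rule integrable_continuous_real, rule cont_sub[OF q_cont[OF c1] tT])
  have i2: "(\<lambda>u. (rr m M s2 u)^2 * \<beta> (rr m M s2 u)) integrable_on {0..t}"
    by (rule integrable_continuous_real, rule cont_sub[OF q_cont[OF c2] tT])
  have cf: "continuous_on {0..t} ?f"
    by (rule continuous_on_diff[OF cont_sub[OF q_cont[OF c1] tT] cont_sub[OF q_cont[OF c2] tT]])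
  have "II m M \<beta> s1 t - II m M \<beta> s2 t = integral {0..t} ?f"
    unfolding II_def using integral_diff[OF i1 i2] by simp
  also have "\<bar>\<dots>\<bar> \<le> Lq * D * t * (t - 0)"
  proof -
    have "\<And>u. u \<in> {0..t} \<Longrightarrow> norm (?f u) \<le> Lq * D * t"
    proof -
      fix u assume u: "u \<in> {0..t}"
      then have uT: "u \<in> {0..T}" using tT by simp
      have "\<bar>?f u\<bar> \<le> Lq * \<bar>rr m M s1 u - rr m M s2 u\<bar>"
        by (rule q_lip[OF rr_abs(2)[OF c1 uT] rr_abs(2)[OF c2 uT]])
      also have "\<dots> \<le> Lq * (D * u)"
        using rr_lip[OF c1 c2 uT mM] D u Lq_nonneg by (intro mult_left_mono) auto
      also have "\<dots> \<le> Lq * (D * t)" using u D0 Lq_nonneg by (intro mult_left_mono) auto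
      also have "\<dots> = Lq * D * t" by simp
      finally show "norm (?f u) \<le> Lq * D * t" by simp
    qed
    then show ?thesis using integral_bound[OF _ cf, of "Lq * D * t"] t by simp
  qed
  finally show ?thesis by simp
qed

definition Pc where "Pc = 2 * Bm * M^2 / m^2"

lemma PP_bd:
  assumes cs: "continuous_on {0..T} s" and t: "t \<in> {0..T}"
  shows "\<bar>PP m M \<beta> eps s t\<bar> \<le> \<bar>eps\<bar> * Pc * t"
proof (cases "t = 0")
  case True then show ?thesis by (simp add: PP_def)
next
  case False
  then have tp: "0 < t" using t by simp
  have r: "m * t \<le> rr m M s t" by (rule rr_abs(3)[OF cs t])
  have mt: "0 < m * t" using mpos tp by simp
  have r2: "(m * t)^2 \<le> (rr m M s t)^2" using r mt by (intro power_mono) auto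
  have "\<bar>PP m M \<beta> eps s t\<bar> = 2 * \<bar>eps\<bar> * \<bar>II m M \<beta> s t\<bar> / (rr m M s t)^2"
    unfolding PP_def by (simp add: abs_mult)
  also have "\<dots> \<le> 2 * \<bar>eps\<bar> * ((M * t)^2 * Bm * t) / (rr m M s t)^2"
    using II_bd[OF cs t] by (intro divide_right_mono mult_left_mono) auto
  also have "\<dots> \<le> 2 * \<bar>eps\<bar> * ((M * t)^2 * Bm * t) / (m * t)^2"
    using r2 mt Bm_nonneg tp by (intro divide_left_mono mult_nonneg_nonneg mult_pos_pos) auto
  also have "\<dots> = \<bar>eps\<bar> * Pc * t" unfolding Pc_def using mpos tp
    by (simp add: field_simps power2_eq_square)
  finally show ?thesis .
qed

definition LP where "LP = 2 * (Lq / m^2 + 2 * Bm * M^3 * T / m^4)"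

lemma LP_nonneg: "0 \<le> LP"
  unfolding LP_def using Lq_nonneg Bm_nonneg mpos mM Tpos by simp

lemma PP_lip:
  assumes c1: "continuous_on {0..T} s1" and c2: "continuous_on {0..T} s2" and t: "t \<in> {0..T}"
    and D: "\<forall>v\<in>{0..t}. \<bar>s1 v - s2 v\<bar> \<le> D"
  shows "\<bar>PP m M \<beta> eps s1 t - PP m M \<beta> eps s2 t\<bar> \<le> \<bar>eps\<bar> * LP * D"
proof (cases "t = 0")
  case True
  have D0: "0 \<le> D" using D t by force
  then show ?thesis using True LP_nonneg by (simp add: PP_def)
next
  case False
  then have tp: "0 < t" using t by simp
  have D0: "0 \<le> D" using D t by force
  define r1 where "r1 = rr m M s1 t"
  define r2 where "r2 = rr m M s2 t"
  define I1 where "I1 = II m M \<beta> s1 t"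
  define I2 where "I2 = II m M \<beta> s2 t"
  have mt: "0 < m * t" using mpos tp by simp
  have r1b: "m * t \<le> r1" "r1 \<le> M * t" unfolding r1_def using rr_bds[OF c1 t mM] by auto
  have r2b: "m * t \<le> r2" "r2 \<le> M * t" unfolding r2_def using rr_bds[OF c2 t mM] by auto
  have dr: "\<bar>r1 - r2\<bar> \<le> D * t" unfolding r1_def r2_def by (rule rr_lip[OF c1 c2 t mM D])
  have dI: "\<bar>I1 - I2\<bar> \<le> Lq * D * t * t" unfolding I1_def I2_def by (rule II_lip[OF c1 c2 t D])
  have I2b: "\<bar>I2\<bar> \<le> (M * t)^2 * Bm * t" unfolding I2_def by (rule II_bd[OF c2 t])
  have r1p: "0 < r1" "0 < r2" using r1b r2b mt by auto
  have e: "I1 / r1^2 - I2 / r2^2 = (I1 - I2) / r1^2 + I2 * ((r2 - r1) * (r2 + r1)) / (r1^2 * r2^2)"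
    using r1p by (simp add: field_simps power2_eq_square)
  have s1: "\<bar>(I1 - I2) / r1^2\<bar> \<le> Lq * D / m^2"
  proof -
    have "\<bar>(I1 - I2) / r1^2\<bar> = \<bar>I1 - I2\<bar> / r1^2" by simp
    also have "\<dots> \<le> (Lq * D * t * t) / r1^2" using dI r1p by (intro divide_right_mono) auto
    also have "\<dots> \<le> (Lq * D * t * t) / (m * t)^2"
      using r1b mt Lq_nonneg D0 tp mpos r1p by (intro divide_left_mono power_mono mult_nonneg_nonneg mult_pos_pos) (auto simp: mult_pos_pos)
    also have "\<dots> = Lq * D / m^2" using mpos tp by (simp add: field_simps power2_eq_square)
    finally show ?thesis .
  qed
  have s2: "\<bar>I2 * ((r2 - r1) * (r2 + r1)) / (r1^2 * r2^2)\<bar> \<le> 2 * Bm * M^3 * T / m^4 * D"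
  proof -
    have n: "\<bar>I2 * ((r2 - r1) * (r2 + r1))\<bar> \<le> ((M * t)^2 * Bm * t) * ((D * t) * (2 * (M * t)))"
      unfolding abs_mult using I2b dr r1b r2b mt
      by (intro mult_mono) (auto simp: abs_minus_commute)
    have dd: "(m * t)^4 \<le> r1^2 * r2^2"
    proof -
      have "(m * t)^2 \<le> r1^2" "(m * t)^2 \<le> r2^2" using r1b r2b mt by (auto intro!: power_mono)
      then have "(m * t)^2 * (m * t)^2 \<le> r1^2 * r2^2" by (intro mult_mono) auto
      then show ?thesis by (simp add: power2_eq_square power4_eq_xxxx mult.assoc)
    qed
    have "\<bar>I2 * ((r2 - r1) * (r2 + r1)) / (r1^2 * r2^2)\<bar> = \<bar>I2 * ((r2 - r1) * (r2 + r1))\<bar> / (r1^2 * r2^2)"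
      by simp
    also have "\<dots> \<le> ((M * t)^2 * Bm * t) * ((D * t) * (2 * (M * t))) / (r1^2 * r2^2)"
      using n r1p by (intro divide_right_mono) auto
    also have "\<dots> \<le> ((M * t)^2 * Bm * t) * ((D * t) * (2 * (M * t))) / (m * t)^4"
      using dd mt Bm_nonneg D0 tp mpos mM r1p
      by (intro divide_left_mono mult_nonneg_nonneg) (auto simp: mult_pos_pos)
    also have "\<dots> = 2 * Bm * M^3 * t / m^4 * D" using mpos tp
      by (simp add: field_simps power2_eq_square power4_eq_xxxx power3_eq_cube)
    also have "\<dots> \<le> 2 * Bm * M^3 * T / m^4 * D"
      using t Bm_nonneg mpos mM D0
      by (intro mult_right_mono divide_right_mono mult_left_mono) auto
    finally show ?thesis .
  qed
  have "\<bar>PP m M \<beta> eps s1 t - PP m M \<beta> eps s2 t\<bar> = 2 * \<bar>eps\<bar> * \<bar>I1 / r1^2 - I2 / r2^2\<bar>"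
  proof -
    have "PP m M \<beta> eps s1 t - PP m M \<beta> eps s2 t = (2 * eps) * (I1 / r1^2 - I2 / r2^2)"
      unfolding PP_def r1_def r2_def I1_def I2_def by (simp add: right_diff_distrib)
    then show ?thesis by (simp add: abs_mult)
  qed
  also have "\<dots> \<le> 2 * \<bar>eps\<bar> * (Lq * D / m^2 + 2 * Bm * M^3 * T / m^4 * D)"
    unfolding e using s1 s2 by (intro mult_left_mono) (auto intro: order_trans[OF abs_triangle_ineq])
  also have "\<dots> = \<bar>eps\<bar> * LP * D" unfolding LP_def by (simp add: algebra_simps)
  finally show ?thesis .
qed

lemma PP_cont:
  assumes cs: "continuous_on {0..T} s"
  shows "continuous_on {0..T} (PP m M \<beta> eps s)"
  unfolding continuous_on_eq_continuous_within
proof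
  fix x assume x: "x \<in> {0..T}"
  show "continuous (at x within {0..T}) (PP m M \<beta> eps s)"
  proof (cases "x = 0")
    case True
    show ?thesis unfolding continuous_within_eps_delta
    proof (intro allI impI)
      fix e :: real assume e: "0 < e"
      define d where "d = e / (\<bar>eps\<bar> * Pc + 1)"
      have Pc0: "0 \<le> Pc" unfolding Pc_def using Bm_nonneg by simp
      have kp: "0 < \<bar>eps\<bar> * Pc + 1" using Pc0 by (simp add: add_nonneg_pos)
      have dp: "0 < d" unfolding d_def using e kp by simp
      show "\<exists>d>0. \<forall>x'\<in>{0..T}. dist x' x < d \<longrightarrow> dist (PP m M \<beta> eps s x') (PP m M \<beta> eps s x) < e"
      proof (intro exI[of _ d] conjI ballI impI dp)
        fix x' assume x': "x' \<in> {0..T}" and dx: "dist x' x < d"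
        have "\<bar>PP m M \<beta> eps s x'\<bar> \<le> \<bar>eps\<bar> * Pc * x'" by (rule PP_bd[OF cs x'])
        also have "\<dots> \<le> (\<bar>eps\<bar> * Pc + 1) * x'" using x' by (simp add: algebra_simps)
        also have "\<dots> < (\<bar>eps\<bar> * Pc + 1) * d"
          using dx True x' Pc0 by (intro mult_strict_left_mono) (auto simp: dist_real_def add_nonneg_pos)
        also have "\<dots> = e" unfolding d_def using kp by simp
        finally show "dist (PP m M \<beta> eps s x') (PP m M \<beta> eps s x) < e"
          using True by (simp add: PP_def dist_real_def)
      qed
    qed
  next
    case False
    then have xp: "0 < x" using x by simp
    have "0 < m * x" using mpos xp by simp
    then have rx: "rr m M s x \<noteq> 0" using rr_abs(3)[OF cs x] by simp
    have t1: "(II m M \<beta> s \<longlongrightarrow> II m M \<beta> s x) (at x within {0..T})"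
      using II_cont[OF cs] x by (simp add: continuous_on_eq_continuous_within continuous_within)
    have t2: "(rr m M s \<longlongrightarrow> rr m M s x) (at x within {0..T})"
      using rr_cont[OF cs] x by (simp add: continuous_on_eq_continuous_within continuous_within)
    have "((\<lambda>u. 2 * eps * II m M \<beta> s u / (rr m M s u)^2) \<longlongrightarrow> 2 * eps * II m M \<beta> s x / (rr m M s x)^2) (at x within {0..T})"
      using rx by (intro tendsto_intros t1 t2) auto
    then show ?thesis unfolding continuous_within PP_def .
  qed
qed

lemma GG_cont:
  "continuous_on {0..T} s \<Longrightarrow> continuous_on {0..T} (GG m M \<beta> eps e2 s)"
  unfolding GG_def by (intro continuous_intros rr_cont PP_cont cont_compose_univ[OF c\<beta>])

lemma GG_lip:
  "\<exists>L\<ge>0. \<forall>(s1::real\<Rightarrow>real) s2 (t::real) (D::real). continuous_on {0..T} s1 \<longrightarrow> continuous_on {0..T} s2 \<longrightarrow> t \<in> {0..T} \<longrightarrow>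
     (\<forall>v\<in>{0..t}. \<bar>s1 v - s2 v\<bar> \<le> D) \<longrightarrow> \<bar>GG m M \<beta> eps e2 s1 t - GG m M \<beta> eps e2 s2 t\<bar> \<le> L * D"
proof -
  define X where "X = M * T"
  define Pm where "Pm = \<bar>eps\<bar> * Pc * T"
  define L where "L = (2 + 6 * X^2 + Pm^2 + \<bar>e2\<bar> * (Bm + X * LB)) * T + X * (2 * Pm) * (\<bar>eps\<bar> * LP)"
  have X0: "0 \<le> X" unfolding X_def using mpos mM Tpos by simp
  have Pc0: "0 \<le> Pc" unfolding Pc_def using Bm_nonneg by simp
  have Pm0: "0 \<le> Pm" unfolding Pm_def using Pc0 Tpos by simp
  have L0: "0 \<le> L" unfolding L_def using X0 Pm0 Bm_nonneg LB_nonneg Tpos LP_nonneg by simp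
  show ?thesis
  proof (intro exI[of _ L] conjI allI impI L0)
    fix s1 s2 :: "real \<Rightarrow> real" and t D :: real assume c1: "continuous_on {0..T} s1" and c2: "continuous_on {0..T} s2"
      and t: "t \<in> {0..T}" and D: "\<forall>v\<in>{0..t}. \<bar>s1 v - s2 v\<bar> \<le> D"
    have D0: "0 \<le> D" using D t by force
    define r1 where "r1 = rr m M s1 t"
    define r2 where "r2 = rr m M s2 t"
    define P1 where "P1 = PP m M \<beta> eps s1 t"
    define P2 where "P2 = PP m M \<beta> eps s2 t"
    have r1X: "\<bar>r1\<bar> \<le> X" and r2X: "\<bar>r2\<bar> \<le> X" unfolding r1_def r2_def X_def
      using rr_abs(2)[OF c1 t] rr_abs(2)[OF c2 t] by auto
    have dr0: "\<bar>r1 - r2\<bar> \<le> D * t" unfolding r1_def r2_def by (rule rr_lip[OF c1 c2 t mM D])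
    have dr: "\<bar>r1 - r2\<bar> \<le> D * T" using dr0 t D0 by (meson atLeastAtMost_iff mult_left_mono order_trans)
    have dP: "\<bar>P1 - P2\<bar> \<le> \<bar>eps\<bar> * LP * D" unfolding P1_def P2_def by (rule PP_lip[OF c1 c2 t D])
    have P1b: "\<bar>P1\<bar> \<le> Pm" unfolding P1_def Pm_def
      using PP_bd[OF c1 t] t Pc0 by (meson atLeastAtMost_iff abs_ge_zero mult_left_mono mult_nonneg_nonneg order_trans)
    have P2b: "\<bar>P2\<bar> \<le> Pm" unfolding P2_def Pm_def
      using PP_bd[OF c2 t] t Pc0 by (meson atLeastAtMost_iff abs_ge_zero mult_left_mono mult_nonneg_nonneg order_trans)
    have e: "GG m M \<beta> eps e2 s1 t - GG m M \<beta> eps e2 s2 t =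
       (-2) * (r1 - r2) + 2 * (r1^3 - r2^3) + (r1 * P1^2 - r2 * P2^2) + e2 * (r1 * \<beta> r1 - r2 * \<beta> r2)"
      unfolding GG_def r1_def r2_def P1_def P2_def by (simp add: algebra_simps power2_eq_square power3_eq_cube)
    have a1: "\<bar>r1^3 - r2^3\<bar> \<le> 3 * X^2 * \<bar>r1 - r2\<bar>" by (rule cube_lip[OF r1X r2X])
    have sqd: "\<bar>P1^2 - P2^2\<bar> \<le> \<bar>P1 - P2\<bar> * (2 * Pm)"
    proof -
      have "\<bar>P1^2 - P2^2\<bar> = \<bar>P1 - P2\<bar> * \<bar>P1 + P2\<bar>" by (simp add: power2_eq_square algebra_simps flip: abs_mult)
      also have "\<dots> \<le> \<bar>P1 - P2\<bar> * (2 * Pm)" using P1b P2b by (intro mult_left_mono) auto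
      finally show ?thesis .
    qed
    have "\<bar>P1\<bar>^2 \<le> Pm^2" by (rule power_mono[OF P1b]) simp
    then have P1sq: "\<bar>P1^2\<bar> \<le> Pm^2" by simp
    have a2: "\<bar>r1 * P1^2 - r2 * P2^2\<bar> \<le> \<bar>r1 - r2\<bar> * Pm^2 + X * (\<bar>P1 - P2\<bar> * (2 * Pm))"
      by (rule lip_prod[OF order_refl sqd P1sq r2X])
    have b1: "\<bar>\<beta> r1 - \<beta> r2\<bar> \<le> LB * \<bar>r1 - r2\<bar>" using LB r1X r2X unfolding X_def by blast
    have b2: "\<bar>\<beta> r1\<bar> \<le> Bm" using Bm r1X unfolding X_def by blast
    have a3: "\<bar>r1 * \<beta> r1 - r2 * \<beta> r2\<bar> \<le> \<bar>r1 - r2\<bar> * Bm + X * (LB * \<bar>r1 - r2\<bar>)"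
      by (rule lip_prod[OF order_refl b1 b2 r2X])
    have "\<bar>GG m M \<beta> eps e2 s1 t - GG m M \<beta> eps e2 s2 t\<bar> \<le>
        2 * \<bar>r1 - r2\<bar> + 2 * \<bar>r1^3 - r2^3\<bar> + \<bar>r1 * P1^2 - r2 * P2^2\<bar> + \<bar>e2\<bar> * \<bar>r1 * \<beta> r1 - r2 * \<beta> r2\<bar>"
      unfolding e using tri4[of "r1 - r2" "r1^3 - r2^3" "r1 * P1^2 - r2 * P2^2" "e2 * (r1 * \<beta> r1 - r2 * \<beta> r2)"]
      by (simp add: abs_mult)
    also have "\<dots> \<le> 2 * \<bar>r1 - r2\<bar> + 2 * (3 * X^2 * \<bar>r1 - r2\<bar>) + (\<bar>r1 - r2\<bar> * Pm^2 + X * (\<bar>P1 - P2\<bar> * (2 * Pm)))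
        + \<bar>e2\<bar> * (\<bar>r1 - r2\<bar> * Bm + X * (LB * \<bar>r1 - r2\<bar>))"
      using a1 a2 a3 by (intro add_mono mult_left_mono) auto
    also have "\<dots> = (2 + 6 * X^2 + Pm^2 + \<bar>e2\<bar> * (Bm + X * LB)) * \<bar>r1 - r2\<bar> + X * (2 * Pm) * \<bar>P1 - P2\<bar>"
      by (simp add: algebra_simps)
    also have "\<dots> \<le> (2 + 6 * X^2 + Pm^2 + \<bar>e2\<bar> * (Bm + X * LB)) * (D * T) + X * (2 * Pm) * (\<bar>eps\<bar> * LP * D)"
      using dr dP X0 Pm0 Bm_nonneg LB_nonneg by (intro add_mono mult_left_mono) auto
    also have "\<dots> = L * D" unfolding L_def by (simp add: algebra_simps)
    finally show "\<bar>GG m M \<beta> eps e2 s1 t - GG m M \<beta> eps e2 s2 t\<bar> \<le> L * D" .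
  qed
qed

definition clT :: "real \<Rightarrow> real" where "clT x = max 0 (min T x)"

lemma clT_in: "clT x \<in> {0..T}" unfolding clT_def using Tpos by auto
lemma clT_ge0 [simp]: "0 \<le> clT x" unfolding clT_def using Tpos by auto
lemma clT_leT [simp]: "clT x \<le> T" unfolding clT_def using Tpos by auto
lemma clT_id: "x \<in> {0..T} \<Longrightarrow> clT x = x" unfolding clT_def by auto
lemma clT_cont: "continuous_on UNIV clT" unfolding clT_def by (intro continuous_intros)

lemma exp_int:
  fixes y k C :: real
  assumes "0 \<le> y" "0 < k"
  shows "integral {0..y} (\<lambda>u. C * exp (k * u)) = C * (exp (k * y) - 1) / k"
proof -
  have "((\<lambda>u. C * exp (k * u)) has_integral ((\<lambda>u. C * exp (k * u) / k) y - (\<lambda>u. C * exp (k * u) / k) 0)) {0..y}"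
  proof (rule fundamental_theorem_of_calculus[of 0 y "\<lambda>u. C * exp (k * u) / k" "\<lambda>u. C * exp (k * u)"])
    show "0 \<le> y" by (rule assms(1))
  next
    fix x assume "x \<in> {0..y}"
    show "((\<lambda>u. C * exp (k * u) / k) has_vector_derivative C * exp (k * x)) (at x within {0..y})"
      unfolding has_real_derivative_iff_has_vector_derivative[symmetric]
      using assms(2) by (auto intro!: derivative_eq_intros)
  qed
  then have "integral {0..y} (\<lambda>u. C * exp (k * u)) = C * exp (k * y) / k - C * exp (k * 0) / k"
    by (rule integral_unique)
  then show ?thesis using assms(2) by (simp add: diff_divide_distrib right_diff_distrib)
qed

lemma fixpt_exists:
  "\<exists>s. continuous_on {0..T} s \<and> (\<forall>x\<in>{0..T}. s x = s0 + integral {0..x} (GG m M \<beta> eps e2 s))"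
proof -
  obtain L where L0: "0 \<le> L" and Lip: "\<And>s1 s2 t D. continuous_on {0..T} s1 \<Longrightarrow> continuous_on {0..T} s2 \<Longrightarrow> t \<in> {0..T} \<Longrightarrow>
     (\<forall>v\<in>{0..t}. \<bar>s1 v - s2 v\<bar> \<le> D) \<Longrightarrow> \<bar>GG m M \<beta> eps e2 s1 t - GG m M \<beta> eps e2 s2 t\<bar> \<le> L * D"
    using GG_lip[of eps e2] by blast
  define k where "k = 2 * L + 1"
  have kp: "0 < k" unfolding k_def using L0 by simp
  define sf :: "(real \<Rightarrow>\<^sub>C real) \<Rightarrow> real \<Rightarrow> real" where "sf g x = apply_bcontfun g x * exp (k * clT x)" for g x
  have sf_cont: "continuous_on S (sf g)" for g S
  proof -
    have "continuous_on UNIV (sf g)" unfolding sf_def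
      by (intro continuous_intros continuous_on_compose2[OF clT_cont, of UNIV]) (auto simp: clT_in)
    then show ?thesis by (rule continuous_on_subset) auto
  qed
  define h where "h g y = exp (- k * y) * (s0 + integral {0..y} (GG m M \<beta> eps e2 (sf g)))" for g y
  have h_cont: "continuous_on {0..T} (h g)" for g
    unfolding h_def
    by (intro continuous_intros indefinite_integral_continuous_1 integrable_continuous_real GG_cont sf_cont)
  have hb: "(\<lambda>x. h g (clT x)) \<in> bcontfun" for g
  proof -
    have c: "continuous_on UNIV (\<lambda>x. h g (clT x))"
      by (rule continuous_on_compose2[OF h_cont[of g] clT_cont]) (auto simp: clT_in)
    have "range (\<lambda>x. h g (clT x)) \<subseteq> h g ` {0..T}" using clT_in by auto
    moreover have "bounded (h g ` {0..T})"
      by (intro compact_imp_bounded compact_continuous_image h_cont) auto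
    ultimately have "bounded (range (\<lambda>x. h g (clT x)))" by (rule bounded_subset[rotated])
    then show ?thesis using c unfolding bcontfun_def by simp
  qed
  define \<Phi> where "\<Phi> g = Bcontfun (\<lambda>x. h g (clT x))" for g
  have \<Phi>_app: "apply_bcontfun (\<Phi> g) x = h g (clT x)" for g x
    unfolding \<Phi>_def using hb by (simp add: Bcontfun_inverse)
  have contr: "dist (\<Phi> g1) (\<Phi> g2) \<le> (1/2) * dist g1 g2" for g1 g2
  proof (rule dist_bound)
    fix x
    define D where "D = dist g1 g2"
    have D0: "0 \<le> D" unfolding D_def by simp
    define y where "y = clT x"
    have y: "y \<in> {0..T}" unfolding y_def by (rule clT_in)
    have pt: "\<bar>GG m M \<beta> eps e2 (sf g1) u - GG m M \<beta> eps e2 (sf g2) u\<bar> \<le> L * (D * exp (k * u))"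
      if u: "u \<in> {0..T}" for u
    proof (rule Lip[OF sf_cont sf_cont u], intro ballI)
      fix v assume v: "v \<in> {0..u}"
      then have vT: "v \<in> {0..T}" using u by auto
      have "\<bar>sf g1 v - sf g2 v\<bar> = \<bar>apply_bcontfun g1 v - apply_bcontfun g2 v\<bar> * exp (k * v)"
        unfolding sf_def clT_id[OF vT] by (simp add: abs_mult flip: left_diff_distrib)
      also have "\<dots> \<le> D * exp (k * u)"
        using dist_bounded[of g1 v g2] v kp unfolding D_def dist_real_def
        by (intro mult_mono) auto
      finally show "\<bar>sf g1 v - sf g2 v\<bar> \<le> D * exp (k * u)" .
    qed
    have i1: "GG m M \<beta> eps e2 (sf g1) integrable_on {0..y}"
      using y by (intro int_sub[of T] GG_cont sf_cont) auto
    have i2: "GG m M \<beta> eps e2 (sf g2) integrable_on {0..y}"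
      using y by (intro int_sub[of T] GG_cont sf_cont) auto
    have ie: "(\<lambda>u. L * D * exp (k * u)) integrable_on {0..y}"
      by (intro integrable_continuous_real continuous_intros)
    have "\<bar>integral {0..y} (GG m M \<beta> eps e2 (sf g1)) - integral {0..y} (GG m M \<beta> eps e2 (sf g2))\<bar>
        = \<bar>integral {0..y} (\<lambda>u. GG m M \<beta> eps e2 (sf g1) u - GG m M \<beta> eps e2 (sf g2) u)\<bar>"
      using integral_diff[OF i1 i2] by simp
    also have "\<dots> \<le> integral {0..y} (\<lambda>u. L * D * exp (k * u))"
      using integral_norm_bound_integral[OF integrable_diff[OF i1 i2] ie] pt y
      by (simp add: mult.assoc)
    also have "\<dots> = L * D * (exp (k * y) - 1) / k" using exp_int[of y k "L * D"] y kp by simp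
    also have "\<dots> \<le> L * D * exp (k * y) / k"
      using L0 D0 kp by (intro divide_right_mono mult_left_mono) auto
    finally have bd: "\<bar>integral {0..y} (GG m M \<beta> eps e2 (sf g1)) - integral {0..y} (GG m M \<beta> eps e2 (sf g2))\<bar>
        \<le> L * D * exp (k * y) / k" .
    have "dist (apply_bcontfun (\<Phi> g1) x) (apply_bcontfun (\<Phi> g2) x)
        = exp (- k * y) * \<bar>integral {0..y} (GG m M \<beta> eps e2 (sf g1)) - integral {0..y} (GG m M \<beta> eps e2 (sf g2))\<bar>"
      unfolding \<Phi>_app h_def y_def[symmetric] dist_real_def
      by (simp add: abs_mult flip: right_diff_distrib)
    also have "\<dots> \<le> exp (- k * y) * (L * D * exp (k * y) / k)"
      using bd by (intro mult_left_mono) auto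
    also have "\<dots> = L * D / k"
    proof -
      have "exp (- k * y) * exp (k * y) = 1" by (simp flip: exp_add)
      then show ?thesis by (simp add: field_simps)
    qed
    also have "\<dots> \<le> (1/2) * D"
    proof -
      have "L * D \<le> (1/2) * D * k" unfolding k_def using D0 by (simp add: algebra_simps)
      then show ?thesis by (subst pos_divide_le_eq[OF kp])
    qed
    finally show "dist (apply_bcontfun (\<Phi> g1) x) (apply_bcontfun (\<Phi> g2) x) \<le> (1/2) * dist g1 g2"
      unfolding D_def .
  qed
  obtain g where g: "\<Phi> g = g" using banach_fix_type[of "1/2" \<Phi>] contr by auto
  show ?thesis
  proof (intro exI[of _ "sf g"] conjI sf_cont ballI)
    fix x assume x: "x \<in> {0..T}"
    have "apply_bcontfun g x = h g x" using \<Phi>_app[of g x] g clT_id[OF x] by simp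
    then have "sf g x = h g x * exp (k * x)" unfolding sf_def clT_id[OF x] by simp
    also have "\<dots> = (s0 + integral {0..x} (GG m M \<beta> eps e2 (sf g))) * (exp (- k * x) * exp (k * x))"
      unfolding h_def by simp
    also have "exp (- k * x) * exp (k * x) = 1" by (simp flip: exp_add)
    finally show "sf g x = s0 + integral {0..x} (GG m M \<beta> eps e2 (sf g))" by simp
  qed
qed

end

lemma bootstrap:
  fixes s :: "real \<Rightarrow> real"
  assumes cs: "continuous_on {0..T} s" and T: "0 \<le> T"
    and s0: "m < s 0" "s 0 < M"
    and step: "\<And>t. t \<in> {0..T} \<Longrightarrow> (\<forall>u\<in>{0..t}. m \<le> s u \<and> s u \<le> M) \<Longrightarrow> m < s t \<and> s t < M"
  shows "\<forall>t\<in>{0..T}. m \<le> s t \<and> s t \<le> M"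
proof (rule ccontr)
  assume na: "\<not> ?thesis"
  define S where "S = {0..T} \<inter> s -` ({..m} \<union> {M..})"
  have cl: "closed S" unfolding S_def
    by (intro continuous_closed_preimage cs) auto
  have "bounded S" unfolding S_def by (rule bounded_subset[of "{0..T}"]) auto
  then have cS: "compact S" using cl by (simp add: compact_eq_bounded_closed)
  have nS: "S \<noteq> {}"
  proof -
    from na obtain t where "t \<in> {0..T}" "\<not> (m \<le> s t \<and> s t \<le> M)" by blast
    then have "t \<in> S" unfolding S_def by auto
    then show ?thesis by blast
  qed
  obtain t1 where t1: "t1 \<in> S" and min0: "\<forall>t\<in>S. t1 \<le> t"
    using compact_attains_inf[OF cS nS] by blast
  have min: "\<And>t. t \<in> S \<Longrightarrow> t1 \<le> t" using min0 by blast
  have t1T: "t1 \<in> {0..T}" using t1 unfolding S_def by auto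
  have below: "m < s u \<and> s u < M" if u: "u \<in> {0..T}" "u < t1" for u
  proof (rule ccontr)
    assume "\<not> (m < s u \<and> s u < M)"
    then have "u \<in> S" unfolding S_def using u by auto
    then show False using min[of u] u(2) by linarith
  qed
  have cs1: "continuous_on {0..t1} s" using t1T by (intro cont_sub[OF cs]) auto
  have at1: "m \<le> s t1 \<and> s t1 \<le> M"
  proof (rule ccontr)
    assume a: "\<not> (m \<le> s t1 \<and> s t1 \<le> M)"
    show False
    proof (cases "s t1 < m")
      case True
      have "0 \<le> t1" using t1T by simp
      then obtain u where u: "0 \<le> u" "u \<le> t1" "s u = m"
        using IVT2'[of s t1 m 0, OF _ _ _ cs1] True s0(1) by fastforce
      then have "u \<in> S" unfolding S_def using t1T by auto
      then have "t1 \<le> u" by (rule min)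
      then show False using u True by auto
    next
      case False
      then have "M < s t1" using a by auto
      have "0 \<le> t1" using t1T by simp
      then obtain u where u: "0 \<le> u" "u \<le> t1" "s u = M"
        using IVT'[of s 0 M t1, OF _ _ _ cs1] \<open>M < s t1\<close> s0(2) by fastforce
      then have "u \<in> S" unfolding S_def using t1T by auto
      then have "t1 \<le> u" by (rule min)
      then show False using u \<open>M < s t1\<close> by auto
    qed
  qed
  have "\<forall>u\<in>{0..t1}. m \<le> s u \<and> s u \<le> M"
  proof
    fix u assume u: "u \<in> {0..t1}"
    show "m \<le> s u \<and> s u \<le> M"
    proof (cases "u = t1")
      case True then show ?thesis using at1 by simp
    next
      case False then show ?thesis using below[of u] u t1T by auto
    qed
  qed
  then have "m < s t1 \<and> s t1 < M" using step t1T by blast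
  then show False using t1 unfolding S_def by auto
qed


lemma bracket_cont [continuous_intros]:
  "continuous_on S f \<Longrightarrow> continuous_on S (\<lambda>x. bracket d1 d3 d4 sst eps sig (f x))"
  unfolding bracket_def by (intro continuous_intros)

lemma hole_at:
  assumes H: "hole_sys_sol d1 d3 d4 sst eps sig {0<..T} r s psi" and x: "x \<in> {0<..<T}"
  shows "r x \<noteq> 0" "(r has_real_derivative s x) (at x)"
    "(s has_real_derivative (- 2 * r x * (1 - (r x)^2) + r x * (psi x)^2
             + 2 * eps^2 * d1 * r x * bracket d1 d3 d4 sst eps sig (r x))) (at x)"
    "(psi has_real_derivative (- 2 * (s x / r x) * psi x + 2 * eps * bracket d1 d3 d4 sst eps sig (r x))) (at x)"
proof -
  have xJ: "x \<in> {0<..T}" using x by auto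
  have e: "at x within {0<..T} = at x"
    by (rule at_within_open_subset[of x "{0<..<T}"]) (use x in auto)
  have hx: "r x \<noteq> 0 \<and>
        (r has_real_derivative s x) (at x within {0<..T}) \<and>
        (s has_real_derivative
            (- 2 * r x * (1 - (r x)^2) + r x * (psi x)^2
             + 2 * eps^2 * d1 * r x * bracket d1 d3 d4 sst eps sig (r x))) (at x within {0<..T}) \<and>
        (psi has_real_derivative
            (- 2 * (s x / r x) * psi x + 2 * eps * bracket d1 d3 d4 sst eps sig (r x))) (at x within {0<..T})"
    using H xJ unfolding hole_sys_sol_def by blast
  from hx show "r x \<noteq> 0" "(r has_real_derivative s x) (at x)"
    "(s has_real_derivative (- 2 * r x * (1 - (r x)^2) + r x * (psi x)^2
             + 2 * eps^2 * d1 * r x * bracket d1 d3 d4 sst eps sig (r x))) (at x)"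
    "(psi has_real_derivative (- 2 * (s x / r x) * psi x + 2 * eps * bracket d1 d3 d4 sst eps sig (r x))) (at x)"
    unfolding e by auto
qed

lemma ftc_int:
  fixes f f' :: "real \<Rightarrow> real"
  assumes u: "0 \<le> u" and cf: "continuous_on {0..u} f"
    and d: "\<And>x. x \<in> {0<..<u} \<Longrightarrow> (f has_real_derivative f' x) (at x)"
  shows "(f' has_integral (f u - f 0)) {0..u}"
  using fundamental_theorem_of_calculus_interior[OF u cf] d
  by (simp add: has_real_derivative_iff_has_vector_derivative)

lemma r_bounds_from_s:
  fixes r s :: "real \<Rightarrow> real"
  assumes u: "0 \<le> u" and cr: "continuous_on {0..u} r" and r0: "r 0 = 0"
    and d: "\<And>x. x \<in> {0<..<u} \<Longrightarrow> (r has_real_derivative s x) (at x)"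
    and sb: "\<And>v. v \<in> {0..u} \<Longrightarrow> a \<le> s v \<and> s v \<le> b"
  shows "a * u \<le> r u \<and> r u \<le> b * u"
proof -
  have hi: "(s has_integral r u) {0..u}" using ftc_int[OF u cr d] r0 by simp
  have "integral {0..u} (\<lambda>v. a) \<le> integral {0..u} s"
    using sb hi by (intro integral_le) (auto simp: has_integral_integrable)
  moreover have "integral {0..u} s \<le> integral {0..u} (\<lambda>v. b)"
    using sb hi by (intro integral_le) (auto simp: has_integral_integrable)
  moreover have "integral {0..u} s = r u" using hi by (rule integral_unique)
  ultimately show ?thesis using u by (simp add: mult.commute)
qed

lemma w_integral:
  fixes r s psi :: "real \<Rightarrow> real"
  assumes H: "hole_sys_sol d1 d3 d4 sst eps sig {0<..T} r s psi"
    and u: "u \<in> {0..T}" and cr: "continuous_on {0..T} r" and cp: "continuous_on {0..T} psi"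
    and r0: "r 0 = 0"
  shows "((\<lambda>x. 2 * eps * (r x)^2 * bracket d1 d3 d4 sst eps sig (r x)) has_integral ((r u)^2 * psi u)) {0..u}"
proof -
  have uT: "u \<le> T" and u0: "0 \<le> u" using u by auto
  have "((\<lambda>x. 2 * eps * (r x)^2 * bracket d1 d3 d4 sst eps sig (r x)) has_integral
          ((\<lambda>x. (r x)^2 * psi x) u - (\<lambda>x. (r x)^2 * psi x) 0)) {0..u}"
  proof (rule ftc_int[OF u0])
    show "continuous_on {0..u} (\<lambda>x. (r x)^2 * psi x)"
      using cont_sub[OF cr uT] cont_sub[OF cp uT] by (intro continuous_intros)
  next
    fix x assume x: "x \<in> {0<..<u}"
    then have xT: "x \<in> {0<..<T}" using uT by auto
    note h = hole_at[OF H xT]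
    have "((\<lambda>x. (r x)^2 * psi x) has_real_derivative
        (2 * r x * s x * psi x + (r x)^2 * (- 2 * (s x / r x) * psi x + 2 * eps * bracket d1 d3 d4 sst eps sig (r x)))) (at x)"
      by (rule derivative_eq_intros h(2) h(4) refl | simp)+
    moreover have "2 * r x * s x * psi x + (r x)^2 * (- 2 * (s x / r x) * psi x + 2 * eps * bracket d1 d3 d4 sst eps sig (r x))
        = 2 * eps * (r x)^2 * bracket d1 d3 d4 sst eps sig (r x)"
      using h(1) by (simp add: field_simps power2_eq_square)
    ultimately show "((\<lambda>x. (r x)^2 * psi x) has_real_derivative 2 * eps * (r x)^2 * bracket d1 d3 d4 sst eps sig (r x)) (at x)"
      by simp
  qed
  then show ?thesis using r0 by simp
qed


lemma sq_le_imp_abs: "a^2 + b^2 \<le> \<rho>^2 \<Longrightarrow> 0 \<le> \<rho> \<Longrightarrow> \<bar>a\<bar> \<le> \<rho> \<and> \<bar>b::real\<bar> \<le> \<rho>"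
proof -
  assume h: "a^2 + b^2 \<le> \<rho>^2" and r: "0 \<le> \<rho>"
  have "0 \<le> a^2" "0 \<le> b^2" by simp_all
  then have "a^2 \<le> \<rho>^2" "b^2 \<le> \<rho>^2" using h by linarith+
  then show ?thesis using r by (simp add: power2_le_iff_abs_le)
qed

lemma tanh_sq_mono: "0 \<le> (x::real) \<Longrightarrow> x \<le> T \<Longrightarrow> tanh x ^ 2 \<le> tanh T ^ 2"
  by (intro power_mono) auto

lemma orbit_bounds:
  fixes r s psi :: "real \<Rightarrow> real"
  assumes orb: "orbit_from_Sigma d1 d3 d4 sst eps sig s0 T r s psi"
    and T: "0 < T" and m: "0 < m" "m \<le> (1 - tanh T ^ 2) / 2"
    and Bm: "\<And>x. \<bar>x\<bar> \<le> 2 * T \<Longrightarrow> \<bar>bracket d1 d3 d4 sst eps sig x\<bar> \<le> Bm"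
    and \<rho>: "0 < \<rho>" "\<rho> < m" "\<rho> < 1"
    and c: "c = 2 * T * (\<bar>eps\<bar> * (8 * Bm / m^2) * T)^2 + \<bar>2 * eps^2 * d1\<bar> * (2 * T) * Bm"
    and small: "((s0 - 1)^2 + c^2 * T) * exp ((4 + 6 * (2 * T + 1)^2) * T) \<le> \<rho>^2"
  shows "\<forall>t\<in>{0..T}. \<bar>r t - tanh t\<bar> \<le> \<rho> \<and> \<bar>s t - (1 - tanh t ^ 2)\<bar> \<le> \<rho>"
proof -
  have cr: "continuous_on {0..T} r" and cs: "continuous_on {0..T} s" and cp: "continuous_on {0..T} psi"
    and r0: "r 0 = 0" and s00: "s 0 = s0" and p0: "psi 0 = 0"
    and H: "hole_sys_sol d1 d3 d4 sst eps sig {0<..T} r s psi"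
    using orb unfolding orbit_from_Sigma_def by auto
  have Bm0: "0 \<le> Bm" using Bm[of 0] T by (smt (verit))
  define k where "k = 4 + 6 * (2 * T + 1)^2"
  have k0: "0 \<le> k" unfolding k_def by simp
  have c0: "0 \<le> c" unfolding c using Bm0 T by simp
  define Pc where "Pc = 8 * Bm / m^2"
  have Pc0: "0 \<le> Pc" unfolding Pc_def using Bm0 by simp
  have key: "(r t - tanh t)^2 + (s t - (1 - tanh t ^ 2))^2 \<le> \<rho>^2"
    if t: "t \<in> {0..T}" and good: "\<forall>u\<in>{0..t}. m \<le> s u \<and> s u \<le> 2" for t
  proof -
    have tT: "t \<le> T" and t0: "0 \<le> t" using t by auto
    have rb: "m * u \<le> r u \<and> r u \<le> 2 * u" if u: "u \<in> {0..t}" for u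
    proof (rule r_bounds_from_s)
      show "0 \<le> u" using u by simp
      show "continuous_on {0..u} r" using u tT by (intro cont_sub[OF cr]) auto
      show "r 0 = 0" by (rule r0)
      show "(r has_real_derivative s x) (at x)" if "x \<in> {0<..<u}" for x
        using hole_at(2)[OF H] that u tT by auto
      show "m \<le> s v \<and> s v \<le> 2" if "v \<in> {0..u}" for v using good that u by auto
    qed
    have rX: "\<bar>r u\<bar> \<le> 2 * T" if u: "u \<in> {0..t}" for u
      using rb[OF u] u tT m by (smt (verit) atLeastAtMost_iff mult_nonneg_nonneg)
    have pb: "\<bar>psi u\<bar> \<le> \<bar>eps\<bar> * Pc * T" if u: "u \<in> {0<..t}" for u
    proof -
      have u0: "0 < u" and ut: "u \<le> t" using u by auto
      have uT': "u \<in> {0..T}" using u tT by auto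
      have hi: "((\<lambda>x. 2 * eps * (r x)^2 * bracket d1 d3 d4 sst eps sig (r x)) has_integral ((r u)^2 * psi u)) {0..u}"
        by (rule w_integral[OF H uT' cr cp r0])
      have "\<bar>(r u)^2 * psi u\<bar> = \<bar>integral {0..u} (\<lambda>x. 2 * eps * (r x)^2 * bracket d1 d3 d4 sst eps sig (r x))\<bar>"
        using hi by (simp add: integral_unique)
      also have "\<dots> \<le> (2 * \<bar>eps\<bar> * (2 * u)^2 * Bm) * (u - 0)"
      proof -
        have "norm (integral {0..u} (\<lambda>x. 2 * eps * (r x)^2 * bracket d1 d3 d4 sst eps sig (r x)))
            \<le> (2 * \<bar>eps\<bar> * (2 * u)^2 * Bm) * (u - 0)"
        proof (rule integral_bound)
          show "0 \<le> u" using u0 by simp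
          show "continuous_on {0..u} (\<lambda>x. 2 * eps * (r x)^2 * bracket d1 d3 d4 sst eps sig (r x))"
            using ut tT by (intro continuous_intros cont_sub[OF cr]) auto
          fix v assume v: "v \<in> {0..u}"
          then have vt: "v \<in> {0..t}" using ut by auto
          have a: "\<bar>r v\<bar> \<le> 2 * u" using rb[OF vt] v m by (smt (verit) atLeastAtMost_iff mult_nonneg_nonneg)
          have "\<bar>r v\<bar>^2 \<le> (2 * u)^2" using a by (intro power_mono) auto
          moreover have "\<bar>bracket d1 d3 d4 sst eps sig (r v)\<bar> \<le> Bm" using Bm rX[OF vt] by blast
          ultimately have "\<bar>r v\<bar>^2 * \<bar>bracket d1 d3 d4 sst eps sig (r v)\<bar> \<le> (2 * u)^2 * Bm"
            by (intro mult_mono) auto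
          then have "(2 * \<bar>eps\<bar>) * (\<bar>r v\<bar>^2 * \<bar>bracket d1 d3 d4 sst eps sig (r v)\<bar>) \<le> (2 * \<bar>eps\<bar>) * ((2 * u)^2 * Bm)"
            by (intro mult_left_mono) auto
          then show "norm (2 * eps * (r v)^2 * bracket d1 d3 d4 sst eps sig (r v)) \<le> 2 * \<bar>eps\<bar> * (2 * u)^2 * Bm"
            by (simp add: abs_mult mult.assoc)
        qed
        then show ?thesis by simp
      qed
      finally have w: "\<bar>(r u)^2 * psi u\<bar> \<le> 8 * \<bar>eps\<bar> * Bm * u^3"
        by (simp add: power2_eq_square power3_eq_cube algebra_simps)
      have ru: "m * u \<le> r u" using rb[of u] u by auto
      have mu: "0 < m * u" using m u0 by simp
      have ru2: "(m * u)^2 \<le> (r u)^2" using ru mu by (intro power_mono) auto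
      have "\<bar>psi u\<bar> = \<bar>(r u)^2 * psi u\<bar> / (r u)^2" using ru mu by (simp add: abs_mult)
      also have "\<dots> \<le> 8 * \<bar>eps\<bar> * Bm * u^3 / (r u)^2" using w by (intro divide_right_mono) auto
      also have "\<dots> \<le> 8 * \<bar>eps\<bar> * Bm * u^3 / (m * u)^2"
      proof -
        have "0 < (m * u)^2" using mu by (simp only: zero_less_power)
        moreover have "0 < (r u)^2" using ru mu by simp
        ultimately have "0 < (r u)^2 * (m * u)^2" by simp
        then show ?thesis using ru2 Bm0 u0 by (intro divide_left_mono) auto
      qed
      also have "\<dots> = \<bar>eps\<bar> * Pc * u" unfolding Pc_def using m u0
        by (simp add: field_simps power2_eq_square power3_eq_cube)
      also have "\<dots> \<le> \<bar>eps\<bar> * Pc * T" using ut tT Pc0 by (intro mult_left_mono) auto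
      finally show ?thesis .
    qed
    define q where "q x = r x * (psi x)^2 + 2 * eps^2 * d1 * r x * bracket d1 d3 d4 sst eps sig (r x)" for x
    have "(r t - tanh t)^2 + (s t - (1 - tanh t ^ 2))^2 \<le> ((s0 - 1)^2 + c^2 * t) * exp ((4 + 6 * (2 * T + 1)^2) * t)"
    proof (rule core_cmp[where \<sigma> = s and q = q])
      show "0 \<le> t" by (rule t0)
      show "continuous_on {0..t} r" "continuous_on {0..t} s" using cont_sub[OF cr tT] cont_sub[OF cs tT] by auto
      show "r 0 = 0" "s 0 = s0" using r0 s00 by auto
      show "(r has_real_derivative s x) (at x)" if "x \<in> {0<..<t}" for x
        using hole_at(2)[OF H] that tT by auto
      show "(s has_real_derivative (- 2 * r x * (1 - r x ^ 2) + q x)) (at x)" if x: "x \<in> {0<..<t}" for x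
      proof -
        have "x \<in> {0<..<T}" using x tT by auto
        from hole_at(3)[OF H this] show ?thesis unfolding q_def by (simp add: algebra_simps)
      qed
      show "\<bar>s x - (1 - tanh x ^ 2)\<bar> \<le> \<bar>s x - (1 - tanh x ^ 2)\<bar>" for x by simp
      show "\<bar>q x\<bar> \<le> c" if x: "x \<in> {0<..<t}" for x
      proof -
        have x1: "x \<in> {0..t}" "x \<in> {0<..t}" using x by auto
        have a: "\<bar>r x\<bar> \<le> 2 * T" by (rule rX[OF x1(1)])
        have b: "\<bar>psi x\<bar> \<le> \<bar>eps\<bar> * Pc * T" by (rule pb[OF x1(2)])
        have b2: "\<bar>psi x\<bar>^2 \<le> (\<bar>eps\<bar> * Pc * T)^2" using b by (intro power_mono) auto
        have g: "\<bar>bracket d1 d3 d4 sst eps sig (r x)\<bar> \<le> Bm" using Bm a by blast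
        have "\<bar>q x\<bar> \<le> \<bar>r x * (psi x)^2\<bar> + \<bar>2 * eps^2 * d1 * r x * bracket d1 d3 d4 sst eps sig (r x)\<bar>"
          unfolding q_def by (rule abs_triangle_ineq)
        also have "\<dots> = \<bar>r x\<bar> * \<bar>psi x\<bar>^2 + \<bar>2 * eps^2 * d1\<bar> * (\<bar>r x\<bar> * \<bar>bracket d1 d3 d4 sst eps sig (r x)\<bar>)"
          by (simp add: abs_mult mult.assoc)
        also have "\<dots> \<le> 2 * T * (\<bar>eps\<bar> * Pc * T)^2 + \<bar>2 * eps^2 * d1\<bar> * ((2 * T) * Bm)"
        proof (rule add_mono)
          show "\<bar>r x\<bar> * \<bar>psi x\<bar>^2 \<le> 2 * T * (\<bar>eps\<bar> * Pc * T)^2"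
            by (rule mult_mono[OF a b2]) (use T in auto)
          have "\<bar>r x\<bar> * \<bar>bracket d1 d3 d4 sst eps sig (r x)\<bar> \<le> (2 * T) * Bm"
            by (rule mult_mono[OF a g]) (use T in auto)
          then show "\<bar>2 * eps^2 * d1\<bar> * (\<bar>r x\<bar> * \<bar>bracket d1 d3 d4 sst eps sig (r x)\<bar>) \<le> \<bar>2 * eps^2 * d1\<bar> * ((2 * T) * Bm)"
            by (rule mult_left_mono) simp
        qed
        also have "\<dots> = 2 * T * (\<bar>eps\<bar> * Pc * T)^2 + \<bar>2 * eps^2 * d1\<bar> * (2 * T) * Bm"
          by (simp add: mult.assoc)
        finally show ?thesis unfolding c Pc_def .
      qed
      show "\<bar>r x\<bar> \<le> 2 * T + 1" if "x \<in> {0<..<t}" for x using rX[of x] that by auto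
      show "1 \<le> 2 * T + 1" using T by simp
      show "0 \<le> c" by (rule c0)
    qed
    also have "\<dots> \<le> ((s0 - 1)^2 + c^2 * T) * exp ((4 + 6 * (2 * T + 1)^2) * T)"
    proof (rule mult_mono)
      show "(s0 - 1)^2 + c^2 * t \<le> (s0 - 1)^2 + c^2 * T" using tT by (simp add: mult_left_mono)
      show "exp ((4 + 6 * (2 * T + 1)^2) * t) \<le> exp ((4 + 6 * (2 * T + 1)^2) * T)"
        using tT by (simp add: mult_left_mono)
      show "0 \<le> (s0 - 1)^2 + c^2 * T" using T by simp
    qed simp
    also have "\<dots> \<le> \<rho>^2" by (rule small)
    finally show ?thesis .
  qed
  have strict: "m < s t \<and> s t < 2"
    if t: "t \<in> {0..T}" and good: "\<forall>u\<in>{0..t}. m \<le> s u \<and> s u \<le> 2" for t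
  proof -
    have ab: "\<bar>s t - (1 - tanh t ^ 2)\<bar> \<le> \<rho>" using sq_le_imp_abs[OF key[OF t good]] \<rho> by simp
    have "s t - (1 - tanh t ^ 2) \<le> \<rho>" "- (s t - (1 - tanh t ^ 2)) \<le> \<rho>"
      using abs_le_D1[OF ab] abs_le_D2[OF ab] by auto
    moreover have "tanh t ^ 2 \<le> tanh T ^ 2" using t by (intro tanh_sq_mono) auto
    moreover have "0 \<le> tanh t ^ 2" by simp
    ultimately have f: "s t - (1 - (tanh t)\<^sup>2) \<le> \<rho>" "- (s t - (1 - (tanh t)\<^sup>2)) \<le> \<rho>"
      "(tanh t)\<^sup>2 \<le> (tanh T)\<^sup>2" "0 \<le> (tanh t)\<^sup>2" by auto
    have m2: "2 * m \<le> 1 - (tanh T)\<^sup>2" using m(2) by simp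
    have "m < s t" using f m2 \<rho> by linarith
    moreover have "s t < 2" using f m \<rho> by linarith
    ultimately show ?thesis by simp
  qed
  have s0in: "m < s 0 \<and> s 0 < 2"
  proof -
    have "(s0 - 1)^2 \<le> \<rho>^2"
    proof -
      have "(s0 - 1)^2 \<le> ((s0 - 1)^2 + c^2 * T) * 1" using T by simp
      also have "\<dots> \<le> ((s0 - 1)^2 + c^2 * T) * exp ((4 + 6 * (2 * T + 1)^2) * T)"
        using T by (intro mult_left_mono) auto
      finally show ?thesis using small by linarith
    qed
    then have ab: "\<bar>s0 - 1\<bar> \<le> \<rho>" using \<rho> by (simp add: power2_le_iff_abs_le)
    have "s0 - 1 \<le> \<rho>" "- (s0 - 1) \<le> \<rho>" using abs_le_D1[OF ab] abs_le_D2[OF ab] by auto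
    moreover have "tanh T ^ 2 \<ge> 0" by simp
    ultimately have f: "s0 - 1 \<le> \<rho>" "- (s0 - 1) \<le> \<rho>" "0 \<le> (tanh T)\<^sup>2" by auto
    have m2: "2 * m \<le> 1 - (tanh T)\<^sup>2" using m(2) by simp
    have "m < s 0" using f s00 m2 \<rho> by linarith
    moreover have "s 0 < 2" using f s00 m \<rho> by linarith
    ultimately show ?thesis by simp
  qed
  have allgood: "\<forall>t\<in>{0..T}. m \<le> s t \<and> s t \<le> 2"
    by (rule bootstrap[OF cs _ _ _ strict]) (use T s0in in auto)
  show ?thesis
  proof
    fix t assume t: "t \<in> {0..T}"
    have "\<forall>u\<in>{0..t}. m \<le> s u \<and> s u \<le> 2" using allgood t by auto
    from sq_le_imp_abs[OF key[OF t this]] \<rho> show "\<bar>r t - tanh t\<bar> \<le> \<rho> \<and> \<bar>s t - (1 - tanh t ^ 2)\<bar> \<le> \<rho>"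
      by simp
  qed
qed

lemma tri3: "\<bar>a + b + c\<bar> \<le> \<bar>a\<bar> + \<bar>b\<bar> + \<bar>c::real\<bar>" by arith

lemma bracket_bd:
  assumes "\<bar>x\<bar> \<le> X"
  shows "\<bar>bracket d1 d3 d4 sst eps sig x\<bar> \<le> \<bar>d1 + d3\<bar> * (1 + X^2) + \<bar>d4\<bar> * (1 + X^4) + \<bar>eps^2 * sst + sig\<bar>"
proof -
  have x2: "\<bar>1 - x^2\<bar> \<le> 1 + X^2"
  proof -
    have "\<bar>x\<bar>^2 \<le> X^2" using assms by (intro power_mono) auto
    then show ?thesis by (simp add: abs_le_iff)
  qed
  have x4: "\<bar>1 - x^4\<bar> \<le> 1 + X^4"
  proof -
    have "\<bar>x\<bar>^4 \<le> X^4" using assms by (intro power_mono) auto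
    then have h1: "x^4 \<le> X^4" by (simp add: power_abs)
    have h2: "0 \<le> x^4" by (simp add: zero_le_even_power)
    have h3: "0 \<le> X^4" by (simp add: zero_le_even_power)
    have h4: "- (x^4) \<le> X^4" using h2 h3 by linarith
    show ?thesis using h1 h4 by (simp add: abs_le_iff)
  qed
  have "\<bar>bracket d1 d3 d4 sst eps sig x\<bar> \<le> \<bar>d1 + d3\<bar> * \<bar>1 - x^2\<bar> + \<bar>d4\<bar> * \<bar>1 - x^4\<bar> + \<bar>eps^2 * sst + sig\<bar>"
  proof -
    have e: "bracket d1 d3 d4 sst eps sig x = (d1 + d3) * (1 - x^2) + d4 * (1 - x^4) + (eps^2 * sst + sig)"
      unfolding bracket_def by simp
    show ?thesis unfolding e using tri3[of "(d1 + d3) * (1 - x^2)" "d4 * (1 - x^4)" "eps^2 * sst + sig"]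
      by (simp add: abs_mult)
  qed
  also have "\<dots> \<le> \<bar>d1 + d3\<bar> * (1 + X^2) + \<bar>d4\<bar> * (1 + X^4) + \<bar>eps^2 * sst + sig\<bar>"
    using x2 x4 by (intro add_mono mult_left_mono) auto
  finally show ?thesis .
qed

lemma bracket_lip:
  assumes x: "\<bar>x\<bar> \<le> X" and y: "\<bar>y\<bar> \<le> X"
  shows "\<bar>bracket d1 d3 d4 sst eps sig x - bracket d1 d3 d4 sst eps sig y\<bar>
     \<le> (\<bar>d1 + d3\<bar> * (2 * X) + \<bar>d4\<bar> * (4 * X^3)) * \<bar>x - y\<bar>"
proof -
  have X0: "0 \<le> X" using x by simp
  have a: "\<bar>x^2 - y^2\<bar> \<le> (2 * X) * \<bar>x - y\<bar>"
  proof -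
    have "\<bar>x^2 - y^2\<bar> = \<bar>x + y\<bar> * \<bar>x - y\<bar>" by (simp add: power2_eq_square algebra_simps flip: abs_mult)
    also have "\<dots> \<le> (2 * X) * \<bar>x - y\<bar>" using x y by (intro mult_right_mono) auto
    finally show ?thesis .
  qed
  have b: "\<bar>x^4 - y^4\<bar> \<le> (4 * X^3) * \<bar>x - y\<bar>"
  proof -
    have "x^4 - y^4 = (x^2 + y^2) * (x^2 - y^2)"
      by (simp add: power2_eq_square power4_eq_xxxx algebra_simps)
    then have "\<bar>x^4 - y^4\<bar> = \<bar>x^2 + y^2\<bar> * \<bar>x^2 - y^2\<bar>" by (simp add: abs_mult)
    also have "\<dots> \<le> (2 * X^2) * ((2 * X) * \<bar>x - y\<bar>)"
    proof (rule mult_mono[OF _ a])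
      have "\<bar>x\<bar>^2 \<le> X^2" by (rule power_mono[OF x]) simp
      moreover have "\<bar>y\<bar>^2 \<le> X^2" by (rule power_mono[OF y]) simp
      ultimately have "x^2 \<le> X^2" "y^2 \<le> X^2" by simp_all
      then show "\<bar>x^2 + y^2\<bar> \<le> 2 * X^2" by simp
    qed auto
    also have "\<dots> = (4 * X^3) * \<bar>x - y\<bar>" by (simp add: power2_eq_square power3_eq_cube)
    finally show ?thesis .
  qed
  have e: "bracket d1 d3 d4 sst eps sig x - bracket d1 d3 d4 sst eps sig y = (d1 + d3) * (y^2 - x^2) + d4 * (y^4 - x^4)"
    unfolding bracket_def by (simp add: algebra_simps)
  have "\<bar>(d1 + d3) * (y^2 - x^2) + d4 * (y^4 - x^4)\<bar> \<le> \<bar>d1 + d3\<bar> * \<bar>x^2 - y^2\<bar> + \<bar>d4\<bar> * \<bar>x^4 - y^4\<bar>"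
    using abs_triangle_ineq[of "(d1 + d3) * (y^2 - x^2)" "d4 * (y^4 - x^4)"]
    by (simp add: abs_mult abs_minus_commute)
  also have "\<dots> \<le> \<bar>d1 + d3\<bar> * ((2 * X) * \<bar>x - y\<bar>) + \<bar>d4\<bar> * ((4 * X^3) * \<bar>x - y\<bar>)"
    using a b by (intro add_mono mult_left_mono) auto
  also have "\<dots> = (\<bar>d1 + d3\<bar> * (2 * X) + \<bar>d4\<bar> * (4 * X^3)) * \<bar>x - y\<bar>" by (simp add: algebra_simps)
  finally show ?thesis unfolding e .
qed

lemma bracket_cont_univ: "continuous_on UNIV (bracket d1 d3 d4 sst eps sig)"
  unfolding bracket_def by (intro continuous_intros)


lemma orbit_exists:
  assumes T: "0 < T" and m: "0 < m" "m \<le> (1 - tanh T ^ 2) / 2"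
    and Bm: "\<And>x. \<bar>x\<bar> \<le> 2 * T \<Longrightarrow> \<bar>bracket d1 d3 d4 sst eps sig x\<bar> \<le> Bm"
    and LB: "\<And>x y. \<bar>x\<bar> \<le> 2 * T \<Longrightarrow> \<bar>y\<bar> \<le> 2 * T \<Longrightarrow>
       \<bar>bracket d1 d3 d4 sst eps sig x - bracket d1 d3 d4 sst eps sig y\<bar> \<le> LB * \<bar>x - y\<bar>"
    and \<rho>: "0 < \<rho>" "\<rho> < m" "\<rho> < 1"
    and c: "c = 2 * T * (\<bar>eps\<bar> * (8 * Bm / m^2) * T)^2 + \<bar>2 * eps^2 * d1\<bar> * (2 * T) * Bm"
    and small: "((s0 - 1)^2 + c^2 * T) * exp ((4 + 6 * (2 * T + 1)^2) * T) \<le> \<rho>^2"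
  shows "\<exists>r s psi. orbit_from_Sigma d1 d3 d4 sst eps sig s0 T r s psi"
proof -
  define \<beta> where "\<beta> = bracket d1 d3 d4 sst eps sig"
  define e2 where "e2 = 2 * eps^2 * d1"
  have c\<beta>: "continuous_on UNIV \<beta>" unfolding \<beta>_def by (rule bracket_cont_univ)
  have m2: "2 * m \<le> 1 - tanh T ^ 2" using m(2) by simp
  have mM: "m \<le> 2" using m2 by (smt (verit) zero_le_power2)
  have Bm': "\<And>x. \<bar>x\<bar> \<le> 2 * T \<Longrightarrow> \<bar>\<beta> x\<bar> \<le> Bm" unfolding \<beta>_def by (rule Bm)
  have LB': "\<And>x y. \<bar>x\<bar> \<le> 2 * T \<Longrightarrow> \<bar>y\<bar> \<le> 2 * T \<Longrightarrow> \<bar>\<beta> x - \<beta> y\<bar> \<le> LB * \<bar>x - y\<bar>"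
    unfolding \<beta>_def by (rule LB)
  note ctx = c\<beta> m(1) mM T Bm' LB'
  obtain s where cs: "continuous_on {0..T} s"
    and fx: "\<forall>x\<in>{0..T}. s x = s0 + integral {0..x} (GG m 2 \<beta> eps e2 s)"
    using fixpt_exists[OF ctx, of s0 eps e2] by blast
  define r where "r = rr m 2 s"
  define psi where "psi = PP m 2 \<beta> eps s"
  have Bm0: "0 \<le> Bm" using Bm'[of 0] T by (smt (verit))
  have Pc: "Pc m 2 Bm = 8 * Bm / m^2" using Pc_def[OF ctx] by simp
  have cr: "continuous_on {0..T} r" unfolding r_def by (rule rr_cont[OF cs])
  have s00: "s 0 = s0" using fx T by simp
  have sder: "(s has_real_derivative GG m 2 \<beta> eps e2 s x) (at x within {0..T})" if x: "x \<in> {0..T}" for x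
  proof -
    have d0: "((\<lambda>u. integral {0..u} (GG m 2 \<beta> eps e2 s)) has_real_derivative GG m 2 \<beta> eps e2 s x) (at x within {0..T})"
      unfolding has_real_derivative_iff_has_vector_derivative
      by (rule integral_has_vector_derivative[OF GG_cont[OF ctx cs] x])
    have "((\<lambda>u. s0 + integral {0..u} (GG m 2 \<beta> eps e2 s)) has_real_derivative GG m 2 \<beta> eps e2 s x) (at x within {0..T})"
      using DERIV_add[OF DERIV_const d0, of s0] by simp
    then show ?thesis
      by (rule has_field_derivative_transform_within[where d=1]) (use x fx in auto)
  qed
  have int_open: "at x within {0..T} = at x" if "x \<in> {0<..<T}" for x
    by (rule at_within_open_subset[of x "{0<..<T}"]) (use that in auto)
  have key: "(r t - tanh t)^2 + (s t - (1 - tanh t ^ 2))^2 \<le> \<rho>^2" if t: "t \<in> {0..T}" for t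
  proof -
    have tT: "t \<le> T" and t0: "0 \<le> t" using t by auto
    define q where "q x = r x * (psi x)^2 + e2 * r x * \<beta> (r x)" for x
    have "(r t - tanh t)^2 + (s t - (1 - tanh t ^ 2))^2 \<le> ((s0 - 1)^2 + c^2 * t) * exp ((4 + 6 * (2 * T + 1)^2) * t)"
    proof (rule core_cmp[where \<sigma> = "\<lambda>x. clv m 2 (s x)" and q = q])
      show "0 \<le> t" by (rule t0)
      show "continuous_on {0..t} r" "continuous_on {0..t} s" using cont_sub[OF cr tT] cont_sub[OF cs tT] by auto
      show "r 0 = 0" unfolding r_def by simp
      show "s 0 = s0" by (rule s00)
      show "(r has_real_derivative clv m 2 (s x)) (at x)" if x: "x \<in> {0<..<t}" for x
      proof -
        have x1: "x \<in> {0..T}" "x \<in> {0<..<T}" using x tT by auto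
        show ?thesis using rr_deriv[OF cs x1(1), of m 2] int_open[OF x1(2)] unfolding r_def by simp
      qed
      show "(s has_real_derivative (- 2 * r x * (1 - r x ^ 2) + q x)) (at x)" if x: "x \<in> {0<..<t}" for x
      proof -
        have x1: "x \<in> {0..T}" "x \<in> {0<..<T}" using x tT by auto
        have "GG m 2 \<beta> eps e2 s x = - 2 * r x * (1 - r x ^ 2) + q x"
          unfolding GG_def q_def r_def psi_def by (simp add: algebra_simps)
        then show ?thesis using sder[OF x1(1)] int_open[OF x1(2)] by simp
      qed
      show "\<bar>clv m 2 (s x) - (1 - tanh x ^ 2)\<bar> \<le> \<bar>s x - (1 - tanh x ^ 2)\<bar>" if x: "x \<in> {0<..<t}" for x
      proof -
        have "tanh x ^ 2 \<le> tanh T ^ 2" using x tT by (intro tanh_sq_mono) auto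
        then have "m \<le> 1 - tanh x ^ 2" using m2 m by linarith
        moreover have "1 - tanh x ^ 2 \<le> 2" by (smt (verit) zero_le_power2)
        ultimately have "clv m 2 (1 - tanh x ^ 2) = 1 - tanh x ^ 2" by (rule clv_id)
        then show ?thesis using clv_lip[OF mM, of "s x" "1 - tanh x ^ 2"] by simp
      qed
      show "\<bar>q x\<bar> \<le> c" if x: "x \<in> {0<..<t}" for x
      proof -
        have x1: "x \<in> {0..T}" using x tT by auto
        have a: "\<bar>r x\<bar> \<le> 2 * T" unfolding r_def by (rule rr_abs(2)[OF ctx cs x1])
        have b0: "\<bar>psi x\<bar> \<le> \<bar>eps\<bar> * (8 * Bm / m^2) * x"
          unfolding psi_def using PP_bd[OF ctx cs x1] Pc by simp
        have b: "\<bar>psi x\<bar> \<le> \<bar>eps\<bar> * (8 * Bm / m^2) * T"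
          using b0 x1 Bm0 by (smt (verit) atLeastAtMost_iff mult_left_mono abs_ge_zero divide_nonneg_nonneg
              mult_nonneg_nonneg zero_le_power2)
        have b2: "\<bar>psi x\<bar>^2 \<le> (\<bar>eps\<bar> * (8 * Bm / m^2) * T)^2" using b by (intro power_mono) auto
        have g: "\<bar>\<beta> (r x)\<bar> \<le> Bm" using Bm' a by blast
        have "\<bar>q x\<bar> \<le> \<bar>r x * (psi x)^2\<bar> + \<bar>e2 * r x * \<beta> (r x)\<bar>"
          unfolding q_def by (rule abs_triangle_ineq)
        also have "\<dots> = \<bar>r x\<bar> * \<bar>psi x\<bar>^2 + \<bar>e2\<bar> * (\<bar>r x\<bar> * \<bar>\<beta> (r x)\<bar>)"
          by (simp add: abs_mult mult.assoc)
        also have "\<dots> \<le> 2 * T * (\<bar>eps\<bar> * (8 * Bm / m^2) * T)^2 + \<bar>e2\<bar> * ((2 * T) * Bm)"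
        proof (rule add_mono)
          show "\<bar>r x\<bar> * \<bar>psi x\<bar>^2 \<le> 2 * T * (\<bar>eps\<bar> * (8 * Bm / m^2) * T)^2"
            by (rule mult_mono[OF a b2]) (use T in auto)
          have "\<bar>r x\<bar> * \<bar>\<beta> (r x)\<bar> \<le> (2 * T) * Bm"
            by (rule mult_mono[OF a g]) (use T in auto)
          then show "\<bar>e2\<bar> * (\<bar>r x\<bar> * \<bar>\<beta> (r x)\<bar>) \<le> \<bar>e2\<bar> * ((2 * T) * Bm)"
            by (rule mult_left_mono) simp
        qed
        also have "\<dots> = c" unfolding c e2_def by (simp add: mult.assoc)
        finally show ?thesis .
      qed
      show "\<bar>r x\<bar> \<le> 2 * T + 1" if x: "x \<in> {0<..<t}" for x
      proof -
        have x1: "x \<in> {0..T}" using x tT by auto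
        show ?thesis using rr_abs(2)[OF ctx cs x1] unfolding r_def by simp
      qed
      show "1 \<le> 2 * T + 1" using T by simp
      show "0 \<le> c" unfolding c using Bm0 T by simp
    qed
    also have "\<dots> \<le> ((s0 - 1)^2 + c^2 * T) * exp ((4 + 6 * (2 * T + 1)^2) * T)"
    proof (rule mult_mono)
      show "(s0 - 1)^2 + c^2 * t \<le> (s0 - 1)^2 + c^2 * T" using tT by (simp add: mult_left_mono)
      show "exp ((4 + 6 * (2 * T + 1)^2) * t) \<le> exp ((4 + 6 * (2 * T + 1)^2) * T)"
        using tT by (simp add: mult_left_mono)
      show "0 \<le> (s0 - 1)^2 + c^2 * T" using T by simp
    qed simp
    also have "\<dots> \<le> \<rho>^2" by (rule small)
    finally show ?thesis .
  qed
  have sin: "m < s t \<and> s t < 2" if t: "t \<in> {0..T}" for t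
  proof -
    have ab: "\<bar>s t - (1 - tanh t ^ 2)\<bar> \<le> \<rho>" using sq_le_imp_abs[OF key[OF t]] \<rho> by simp
    have f: "s t - (1 - (tanh t)\<^sup>2) \<le> \<rho>" "- (s t - (1 - (tanh t)\<^sup>2)) \<le> \<rho>"
      using abs_le_D1[OF ab] abs_le_D2[OF ab] by auto
    have f2: "(tanh t)\<^sup>2 \<le> (tanh T)\<^sup>2" using t by (intro tanh_sq_mono) auto
    have f3: "0 \<le> (tanh t)\<^sup>2" by simp
    have "m < s t" using f f2 m2 \<rho> by linarith
    moreover have "s t < 2" using f f3 \<rho> by linarith
    ultimately show ?thesis by simp
  qed
  have clvs: "clv m 2 (s t) = s t" if t: "t \<in> {0..T}" for t
    using sin[OF t] by (intro clv_id) auto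
  have rpos: "0 < r x" if x: "x \<in> {0<..T}" for x
  proof -
    have "m * x \<le> r x" unfolding r_def using rr_abs(3)[OF ctx cs] x by auto
    moreover have "0 < m * x" using m x by simp
    ultimately show ?thesis by simp
  qed
  have rder: "(r has_real_derivative s x) (at x within {0..T})" if x: "x \<in> {0..T}" for x
    using rr_deriv[OF cs x, of m 2] clvs[OF x] unfolding r_def by simp
  have IIder: "(II m 2 \<beta> s has_real_derivative (r x)^2 * \<beta> (r x)) (at x within {0..T})" if x: "x \<in> {0..T}" for x
  proof -
    have "((\<lambda>u. integral {0..u} (\<lambda>u. (rr m 2 s u)^2 * \<beta> (rr m 2 s u))) has_real_derivative (rr m 2 s x)^2 * \<beta> (rr m 2 s x)) (at x within {0..T})"
      unfolding has_real_derivative_iff_has_vector_derivative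
      by (rule integral_has_vector_derivative[OF q_cont[OF ctx cs] x])
    then show ?thesis unfolding r_def II_def[abs_def] by simp
  qed
  have psi_eq: "psi = (\<lambda>u. 2 * eps * II m 2 \<beta> s u / (r u)^2)"
    unfolding psi_def r_def by (rule ext) (simp add: PP_def)
  have orbit: "orbit_from_Sigma d1 d3 d4 sst eps sig s0 T r s psi"
    unfolding orbit_from_Sigma_def hole_sys_sol_def
  proof (intro conjI ballI)
    show "continuous_on {0..T} r" by (rule cr)
    show "continuous_on {0..T} s" by (rule cs)
    show "continuous_on {0..T} psi" unfolding psi_def by (rule PP_cont[OF ctx cs])
    show "r 0 = 0" unfolding r_def by simp
    show "s 0 = s0" by (rule s00)
    show "psi 0 = 0" unfolding psi_def PP_def by simp
    fix x assume x: "x \<in> {0<..T}"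
    have xT: "x \<in> {0..T}" using x by auto
    have sub: "{0<..T} \<subseteq> {0..T}" by auto
    have r0: "r x \<noteq> 0" using rpos[OF x] by simp
    show "r x \<noteq> 0" by (rule r0)
    show "(r has_real_derivative s x) (at x within {0<..T})"
      by (rule DERIV_subset[OF rder[OF xT] sub])
    have "GG m 2 \<beta> eps e2 s x = - 2 * r x * (1 - (r x)^2) + r x * (psi x)^2
             + 2 * eps^2 * d1 * r x * bracket d1 d3 d4 sst eps sig (r x)"
      unfolding GG_def r_def psi_def e2_def \<beta>_def by simp
    then show "(s has_real_derivative (- 2 * r x * (1 - (r x)^2) + r x * (psi x)^2
             + 2 * eps^2 * d1 * r x * bracket d1 d3 d4 sst eps sig (r x))) (at x within {0<..T})"
      using DERIV_subset[OF sder[OF xT] sub] by simp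
    have "((\<lambda>u. 2 * eps * II m 2 \<beta> s u / (r u)^2) has_real_derivative
        ((2 * eps * ((r x)^2 * \<beta> (r x))) * (r x)^2 - 2 * eps * II m 2 \<beta> s x * (2 * r x * s x)) / ((r x)^2 * (r x)^2))
        (at x within {0..T})"
      using r0 by (auto intro!: derivative_eq_intros IIder[OF xT] rder[OF xT] simp: power2_eq_square)
    moreover have "((2 * eps * ((r x)^2 * \<beta> (r x))) * (r x)^2 - 2 * eps * II m 2 \<beta> s x * (2 * r x * s x)) / ((r x)^2 * (r x)^2)
        = - 2 * (s x / r x) * psi x + 2 * eps * bracket d1 d3 d4 sst eps sig (r x)"
      unfolding psi_eq \<beta>_def using r0 by (simp add: field_simps power2_eq_square)
    ultimately show "(psi has_real_derivative (- 2 * (s x / r x) * psi x + 2 * eps * bracket d1 d3 d4 sst eps sig (r x)))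
        (at x within {0<..T})"
      unfolding psi_eq[symmetric] using DERIV_subset sub by metis
  qed
  then show ?thesis by blast
qed

lemma F_int:
  assumes T: "0 \<le> T"
  shows "integral {0..T} (\<lambda>x. tanh x ^ 2 * bracket d1 d3 d4 0 0 0 (tanh x))
       = (d1 + d3) * tanh T ^ 3 / 3 + d4 * (tanh T ^ 3 / 3 + tanh T ^ 5 / 5)"
proof -
  define F where "F x = (d1 + d3) * tanh x ^ 3 / 3 + d4 * (tanh x ^ 3 / 3 + tanh x ^ 5 / 5)" for x :: real
  have "((\<lambda>x. tanh x ^ 2 * bracket d1 d3 d4 0 0 0 (tanh x)) has_integral (F T - F 0)) {0..T}"
  proof (rule fundamental_theorem_of_calculus[OF T])
    fix x :: real assume "x \<in> {0..T}"
    have "(F has_real_derivative tanh x ^ 2 * bracket d1 d3 d4 0 0 0 (tanh x)) (at x)"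
    proof -
      have "(F has_real_derivative ((d1 + d3) * (3 * tanh x ^ 2 * (1 - tanh x ^ 2)) / 3
          + d4 * (3 * tanh x ^ 2 * (1 - tanh x ^ 2) / 3 + 5 * tanh x ^ 4 * (1 - tanh x ^ 2) / 5))) (at x)"
        unfolding F_def by (auto intro!: derivative_eq_intros simp: power2_eq_square power3_eq_cube)
      moreover have "(d1 + d3) * (3 * tanh x ^ 2 * (1 - tanh x ^ 2)) / 3
          + d4 * (3 * tanh x ^ 2 * (1 - tanh x ^ 2) / 3 + 5 * tanh x ^ 4 * (1 - tanh x ^ 2) / 5)
          = tanh x ^ 2 * bracket d1 d3 d4 0 0 0 (tanh x)"
        unfolding bracket_def by (simp add: field_simps power2_eq_square power4_eq_xxxx)
      ultimately show ?thesis by simp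
    qed
    then show "(F has_vector_derivative tanh x ^ 2 * bracket d1 d3 d4 0 0 0 (tanh x)) (at x within {0..T})"
      unfolding has_real_derivative_iff_has_vector_derivative[symmetric] by (rule DERIV_subset) auto
  qed
  then show ?thesis unfolding F_def by (simp add: integral_unique)
qed


definition Lq0 :: "real \<Rightarrow> real \<Rightarrow> real \<Rightarrow> real" where
  "Lq0 d1 d3 d4 = 4 * (\<bar>d1 + d3\<bar> * (1 + 2^2) + \<bar>d4\<bar> * (1 + 2^4)) + 4 * (\<bar>d1 + d3\<bar> * (2 * 2) + \<bar>d4\<bar> * (4 * 2^3))"

lemma bracket_split: "bracket d1 d3 d4 sst eps sig x = bracket d1 d3 d4 0 0 0 x + (eps^2 * sst + sig)"
  unfolding bracket_def by simp

lemma J_est: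
  fixes r :: "real \<Rightarrow> real"
  assumes T: "0 < T" and cr: "continuous_on {0..T} r"
    and rb: "\<forall>t\<in>{0..T}. \<bar>r t - tanh t\<bar> \<le> \<rho>" and \<rho>: "0 \<le> \<rho>" "\<rho> \<le> 1"
  shows "\<bar>integral {0..T} (\<lambda>x. (r x)^2 * bracket d1 d3 d4 sst eps sig (r x))
          - ((d1 + d3) * tanh T ^ 3 / 3 + d4 * (tanh T ^ 3 / 3 + tanh T ^ 5 / 5))\<bar>
        \<le> (Lq0 d1 d3 d4 * \<rho> + 4 * \<bar>eps^2 * sst + sig\<bar>) * T"
proof -
  define \<kappa> where "\<kappa> = eps^2 * sst + sig"
  define f where "f x = (r x)^2 * bracket d1 d3 d4 sst eps sig (r x) - tanh x ^ 2 * bracket d1 d3 d4 0 0 0 (tanh x)" for x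
  have ct: "continuous_on {0..T} tanh" by (intro continuous_intros) auto
  have i1: "(\<lambda>x. (r x)^2 * bracket d1 d3 d4 sst eps sig (r x)) integrable_on {0..T}"
    by (intro integrable_continuous_real continuous_intros cr)
  have i2: "(\<lambda>x. tanh x ^ 2 * bracket d1 d3 d4 0 0 0 (tanh x)) integrable_on {0..T}"
    by (intro integrable_continuous_real continuous_intros ct)
  have cf: "continuous_on {0..T} f" unfolding f_def by (intro continuous_intros cr ct)
  have pt: "norm (f x) \<le> Lq0 d1 d3 d4 * \<rho> + 4 * \<bar>\<kappa>\<bar>" if x: "x \<in> {0..T}" for x
  proof -
    have d: "\<bar>r x - tanh x\<bar> \<le> \<rho>" using rb x by blast
    have tb: "\<bar>tanh x\<bar> \<le> 1" using tanh_real_bounds[of x] by auto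
    have ra: "\<bar>r x\<bar> \<le> 2" using d tb \<rho> by linarith
    have ta: "\<bar>tanh x\<bar> \<le> 2" using tb by simp
    have a: "\<bar>(r x)^2 - tanh x ^ 2\<bar> \<le> 4 * \<rho>"
    proof -
      have "\<bar>(r x)^2 - tanh x ^ 2\<bar> = \<bar>r x + tanh x\<bar> * \<bar>r x - tanh x\<bar>"
        by (simp add: power2_eq_square algebra_simps flip: abs_mult)
      also have "\<dots> \<le> 4 * \<rho>" using ra ta d by (intro mult_mono) auto
      finally show ?thesis .
    qed
    have b: "\<bar>bracket d1 d3 d4 0 0 0 (r x) - bracket d1 d3 d4 0 0 0 (tanh x)\<bar>
        \<le> (\<bar>d1 + d3\<bar> * (2 * 2) + \<bar>d4\<bar> * (4 * 2^3)) * \<rho>"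
      using bracket_lip[OF ra ta, of d1 d3 d4 0 0 0] d
      by (smt (verit) abs_ge_zero mult_left_mono zero_le_mult_iff zero_le_power)
    have c: "\<bar>bracket d1 d3 d4 0 0 0 (r x)\<bar> \<le> \<bar>d1 + d3\<bar> * (1 + 2^2) + \<bar>d4\<bar> * (1 + 2^4)"
      using bracket_bd[OF ra, of d1 d3 d4 0 0 0] by simp
    have "\<bar>tanh x\<bar>^2 \<le> 2^2" by (rule power_mono[OF ta]) simp
    then have t4: "\<bar>tanh x ^ 2\<bar> \<le> 4" by simp
    have p1: "\<bar>(r x)^2 * bracket d1 d3 d4 0 0 0 (r x) - tanh x ^ 2 * bracket d1 d3 d4 0 0 0 (tanh x)\<bar>
        \<le> 4 * \<rho> * (\<bar>d1 + d3\<bar> * (1 + 2^2) + \<bar>d4\<bar> * (1 + 2^4)) + 4 * ((\<bar>d1 + d3\<bar> * (2 * 2) + \<bar>d4\<bar> * (4 * 2^3)) * \<rho>)"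
      by (rule lip_prod[OF a b c t4])
    have p2: "\<bar>(r x)^2 * \<kappa>\<bar> \<le> 4 * \<bar>\<kappa>\<bar>"
    proof -
      have "\<bar>r x\<bar>^2 \<le> 2^2" using ra by (intro power_mono) auto
      then show ?thesis by (simp add: abs_mult mult_right_mono)
    qed
    have e: "f x = ((r x)^2 * bracket d1 d3 d4 0 0 0 (r x) - tanh x ^ 2 * bracket d1 d3 d4 0 0 0 (tanh x)) + (r x)^2 * \<kappa>"
      unfolding f_def \<kappa>_def by (subst bracket_split) (simp add: algebra_simps)
    have "norm (f x) \<le> \<bar>(r x)^2 * bracket d1 d3 d4 0 0 0 (r x) - tanh x ^ 2 * bracket d1 d3 d4 0 0 0 (tanh x)\<bar> + \<bar>(r x)^2 * \<kappa>\<bar>"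
      unfolding e real_norm_def by (rule abs_triangle_ineq)
    also have "\<dots> \<le> Lq0 d1 d3 d4 * \<rho> + 4 * \<bar>\<kappa>\<bar>"
      using p1 p2 unfolding Lq0_def by (simp add: algebra_simps)
    finally show ?thesis .
  qed
  have "integral {0..T} (\<lambda>x. (r x)^2 * bracket d1 d3 d4 sst eps sig (r x))
          - ((d1 + d3) * tanh T ^ 3 / 3 + d4 * (tanh T ^ 3 / 3 + tanh T ^ 5 / 5)) = integral {0..T} f"
    unfolding f_def using integral_diff[OF i1 i2] F_int[of T d1 d3 d4] T by simp
  also have "\<bar>\<dots>\<bar> \<le> (Lq0 d1 d3 d4 * \<rho> + 4 * \<bar>\<kappa>\<bar>) * (T - 0)"
    using integral_bound[OF _ cf, of "Lq0 d1 d3 d4 * \<rho> + 4 * \<bar>\<kappa>\<bar>"] pt T by simp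
  finally show ?thesis unfolding \<kappa>_def by simp
qed


lemma pow_close:
  assumes "0 \<le> \<nu>" "\<nu> \<le> 1"
  shows "\<bar>(1 - \<nu>) ^ n - 1\<bar> \<le> real n * \<nu>"
proof -
  have "1 + real n * (- \<nu>) \<le> (1 + (- \<nu>)) ^ n"
    by (rule Bernoulli_inequality) (use assms in simp)
  moreover have "(1 - \<nu>) ^ n \<le> 1" using assms by (intro power_le_one) auto
  ultimately show ?thesis by (simp add: abs_le_iff)
qed

definition C1 :: "real \<Rightarrow> real \<Rightarrow> real \<Rightarrow> real" where
  "C1 d1 d3 d4 = 4 * (2 + \<bar>d1 + d3\<bar> + 2 * \<bar>d4\<bar>) + 16 * \<bar>(d1 + d3) / 3 + 8 * d4 / 15\<bar>"

lemma C1_nonneg: "0 \<le> C1 d1 d3 d4" unfolding C1_def by simp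

lemma psi_final:
  assumes \<nu>: "0 < \<nu>" "\<nu> \<le> 1/8" and \<tau>: "tanh T = 1 - \<nu>"
    and rT: "\<bar>R - tanh T\<bar> \<le> \<rho>" and \<rho>: "0 \<le> \<rho>" "\<rho> \<le> \<nu>"
    and J: "\<bar>J - ((d1 + d3) * tanh T ^ 3 / 3 + d4 * (tanh T ^ 3 / 3 + tanh T ^ 5 / 5))\<bar> \<le> 2 * \<nu>"
    and psiT: "R^2 * p = 2 * eps * J" and eps: "0 < eps"
  shows "\<bar>p - 2/3 * (d1 + d3 + 8/5 * d4) * eps\<bar> \<le> C1 d1 d3 d4 * \<nu> * eps"
proof -
  define X0 where "X0 = (d1 + d3) / 3 + 8 * d4 / 15"
  define D where "D = \<bar>d1 + d3\<bar> + 2 * \<bar>d4\<bar>"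
  have t3: "\<bar>tanh T ^ 3 - 1\<bar> \<le> 3 * \<nu>" using pow_close[of \<nu> 3] \<nu> \<tau> by simp
  have t5: "\<bar>tanh T ^ 5 - 1\<bar> \<le> 5 * \<nu>" using pow_close[of \<nu> 5] \<nu> \<tau> by simp
  have J0: "\<bar>((d1 + d3) * tanh T ^ 3 / 3 + d4 * (tanh T ^ 3 / 3 + tanh T ^ 5 / 5)) - X0\<bar> \<le> D * \<nu>"
  proof -
    have e: "((d1 + d3) * tanh T ^ 3 / 3 + d4 * (tanh T ^ 3 / 3 + tanh T ^ 5 / 5)) - X0
        = (d1 + d3) * ((tanh T ^ 3 - 1) / 3) + d4 * ((tanh T ^ 3 - 1) / 3 + (tanh T ^ 5 - 1) / 5)"
      unfolding X0_def by (simp add: field_simps)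
    have a: "\<bar>(d1 + d3) * ((tanh T ^ 3 - 1) / 3)\<bar> \<le> \<bar>d1 + d3\<bar> * \<nu>"
      unfolding abs_mult using t3 by (intro mult_left_mono) auto
    have b3: "\<bar>(tanh T ^ 3 - 1) / 3\<bar> \<le> \<nu>" using t3 by simp
    have b5: "\<bar>(tanh T ^ 5 - 1) / 5\<bar> \<le> \<nu>" using t5 by simp
    have b: "\<bar>(tanh T ^ 3 - 1) / 3 + (tanh T ^ 5 - 1) / 5\<bar> \<le> 2 * \<nu>"
      using abs_triangle_ineq[of "(tanh T ^ 3 - 1) / 3" "(tanh T ^ 5 - 1) / 5"] b3 b5 by linarith
    have b': "\<bar>d4 * ((tanh T ^ 3 - 1) / 3 + (tanh T ^ 5 - 1) / 5)\<bar> \<le> \<bar>d4\<bar> * (2 * \<nu>)"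
      unfolding abs_mult using b by (intro mult_left_mono) auto
    show ?thesis unfolding e D_def using a b' abs_triangle_ineq[of "(d1 + d3) * ((tanh T ^ 3 - 1) / 3)" "d4 * ((tanh T ^ 3 - 1) / 3 + (tanh T ^ 5 - 1) / 5)"]
      by (simp add: algebra_simps)
  qed
  have JX: "\<bar>J - X0\<bar> \<le> (2 + D) * \<nu>" using J J0 by (simp add: algebra_simps abs_le_iff)
  have R1: "R \<le> 1" "1 - 2 * \<nu> \<le> R" using rT \<rho> \<tau> by (simp_all add: abs_le_iff)
  have Rp: "3/4 \<le> R" using R1 \<nu> by linarith
  have R2: "1/2 \<le> R^2"
  proof -
    have "(3/4)^2 \<le> R^2" using Rp by (intro power_mono) auto
    moreover have "(3/4::real)^2 = 9/16" by (simp add: power2_eq_square)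
    ultimately show ?thesis by linarith
  qed
  have R2p: "0 < R^2" using R2 by linarith
  have iR: "1 / R^2 \<le> 2" using R2 R2p by (simp add: divide_le_eq)
  have oR: "0 \<le> 1 - R^2" "1 - R^2 \<le> 4 * \<nu>"
  proof -
    have "R^2 \<le> 1" using R1 Rp by (simp add: power_le_one)
    then show "0 \<le> 1 - R^2" by simp
    have "1 - R^2 = (1 - R) * (1 + R)" by (simp add: power2_eq_square algebra_simps)
    also have "\<dots> \<le> (2 * \<nu>) * 2" using R1 Rp by (intro mult_mono) auto
    finally show "1 - R^2 \<le> 4 * \<nu>" by simp
  qed
  have pe: "p = 2 * eps * J / R^2" using psiT R2p by (simp add: field_simps)
  have e: "p - 2/3 * (d1 + d3 + 8/5 * d4) * eps = eps * (2 * (J - X0) * (1 / R^2) + 2 * X0 * (1 - R^2) * (1 / R^2))"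
    unfolding pe X0_def using R2p by (simp add: field_simps)
  have "\<bar>2 * (J - X0) * (1 / R^2) + 2 * X0 * (1 - R^2) * (1 / R^2)\<bar>
      \<le> 2 * ((2 + D) * \<nu>) * 2 + 2 * \<bar>X0\<bar> * (4 * \<nu>) * 2"
  proof -
    have u1: "\<bar>2 * (J - X0) * (1 / R^2)\<bar> \<le> 2 * ((2 + D) * \<nu>) * 2"
      unfolding abs_mult using JX iR R2p by (intro mult_mono) auto
    have u2: "\<bar>2 * X0 * (1 - R^2) * (1 / R^2)\<bar> \<le> 2 * \<bar>X0\<bar> * (4 * \<nu>) * 2"
      unfolding abs_mult using oR iR R2p by (intro mult_mono) auto
    show ?thesis by (rule order_trans[OF abs_triangle_ineq add_mono[OF u1 u2]])
  qed
  also have "\<dots> = C1 d1 d3 d4 * \<nu>" unfolding C1_def D_def X0_def by (simp add: algebra_simps)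
  finally show ?thesis unfolding e abs_mult using eps by (simp add: mult.commute mult_left_mono)
qed


lemma sqrt_sum_sq_le: "sqrt (x^2 + y^2) \<le> \<bar>x\<bar> + \<bar>y::real\<bar>"
proof -
  have "x^2 + y^2 \<le> (\<bar>x\<bar> + \<bar>y\<bar>)^2" by (simp add: power2_eq_square algebra_simps)
  then have "sqrt (x^2 + y^2) \<le> sqrt ((\<bar>x\<bar> + \<bar>y\<bar>)^2)" by (rule real_sqrt_le_mono)
  then show ?thesis by simp
qed

lemma dist_est:
  fixes h :: "real \<Rightarrow> real \<times> real"
  assumes p: "\<bar>p\<bar> \<le> a"
    and hb: "dist (h p) (sqrt (1 - p^2 / 2), 0) \<le> Ke"
    and R: "\<bar>R - 1\<bar> \<le> 2 * \<nu>" and S: "\<bar>S\<bar> \<le> 3 * \<nu>" and pp: "p^2 \<le> \<nu>" "\<nu> \<le> 1" and K: "Ke \<le> \<nu> / 2"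
  shows "infdist (R, S, p) ((\<lambda>p. (fst (h p), snd (h p), p)) ` {-a..a}) \<le> 7 * \<nu>"
proof -
  define h1 where "h1 = fst (h p)"
  define h2 where "h2 = snd (h p)"
  define sq where "sq = sqrt (1 - p^2 / 2)"
  have mem: "(h1, h2, p) \<in> (\<lambda>p. (fst (h p), snd (h p), p)) ` {-a..a}"
    unfolding h1_def h2_def using p by (intro imageI) (auto simp: abs_le_iff)
  have hp: "h p = (h1, h2)" unfolding h1_def h2_def by simp
  have d1: "\<bar>h1 - sq\<bar> \<le> Ke"
    using dist_fst_le[of "h p" "(sq, 0)"] hb unfolding hp sq_def by (simp add: dist_real_def)
  have d2: "\<bar>h2\<bar> \<le> Ke"
    using dist_snd_le[of "h p" "(sq, 0)"] hb unfolding hp sq_def by (simp add: dist_real_def)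
  have sq1: "\<bar>1 - sq\<bar> \<le> \<nu>"
  proof -
    have p0: "0 \<le> p^2" by simp
    have a: "1 - p^2 / 2 \<le> 1" using p0 by simp
    have b: "0 \<le> 1 - p^2 / 2" using pp by simp
    have "sq \<le> 1" unfolding sq_def using a by simp
    moreover have "1 - p^2 / 2 \<le> sq"
    proof -
      have "(1 - p^2 / 2)^2 \<le> 1 - p^2 / 2" using a b by (simp add: power2_eq_square mult_left_le)
      then have "sqrt ((1 - p^2 / 2)^2) \<le> sq" unfolding sq_def by (rule real_sqrt_le_mono)
      then show ?thesis using b by simp
    qed
    ultimately show ?thesis using pp by (simp add: abs_le_iff)
  qed
  have "infdist (R, S, p) ((\<lambda>p. (fst (h p), snd (h p), p)) ` {-a..a}) \<le> dist (R, S, p) (h1, h2, p)"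
    by (rule infdist_le[OF mem])
  also have "\<dots> = sqrt ((R - h1)^2 + (S - h2)^2)" by (simp add: dist_Pair_Pair dist_real_def)
  also have "\<dots> \<le> \<bar>R - h1\<bar> + \<bar>S - h2\<bar>" by (rule sqrt_sum_sq_le)
  also have "\<dots> \<le> 7 * \<nu>" using R S d1 d2 sq1 K by (simp add: abs_le_iff) linarith
  finally show ?thesis .
qed

lemma main_T:
  fixes d1 d3 d4 :: real and sigst :: "real \<Rightarrow> real"
    and M :: "real \<Rightarrow> real \<Rightarrow> (real \<times> real \<times> real) set"
    and e0 sg0 K a :: real
  assumes Bs: "\<forall>eps\<in>{0<..<1}. \<bar>sigst eps\<bar> \<le> Bs"
    and slow: "slow_manifold_family d1 d3 d4 sigst e0 sg0 K a M"
    and \<nu>: "0 < \<nu>" "\<nu> < 1/8" and T: "0 < T" "1 - tanh T = \<nu>"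
  shows "\<exists>\<epsilon>1>0. \<exists>\<sigma>1>0. \<exists>\<delta>>0.
             \<forall>eps\<in>{0<..<\<epsilon>1}. \<forall>sig. \<bar>sig\<bar> < \<sigma>1 \<longrightarrow> (\<forall>s0. \<bar>s0 - 1\<bar> < \<delta> \<longrightarrow>
               (\<exists>r s psi. orbit_from_Sigma d1 d3 d4 (sigst eps) eps sig s0 T r s psi) \<and>
               (\<forall>r s psi. orbit_from_Sigma d1 d3 d4 (sigst eps) eps sig s0 T r s psi \<longrightarrow>
                  infdist (r T, s T, psi T) (M eps sig) \<le> (C1 d1 d3 d4 + 8) * \<nu> \<and>
                  \<bar>psi T - 2/3 * (d1 + d3 + 8/5 * d4) * eps\<bar>
                     \<le> (C1 d1 d3 d4 + 8) * \<nu> * eps + (C1 d1 d3 d4 + 8) * (eps + \<bar>sig\<bar>) * eps))"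
proof -
  define C where "C = C1 d1 d3 d4 + 8"
  have C1_0: "0 \<le> C1 d1 d3 d4" by (rule C1_nonneg)
  have e0: "0 < e0" and sg0: "0 < sg0" and a0: "0 < a" and a2: "a^2 < 2/3"
    and man: "\<forall>eps\<in>{0<..<e0}. \<forall>sig. \<bar>sig\<bar> < sg0 \<longrightarrow>
        (\<exists>h :: real \<Rightarrow> real \<times> real.
           continuous_on {-a..a} h \<and>
           M eps sig = (\<lambda>p. (fst (h p), snd (h p), p)) ` {-a..a} \<and>
           (\<forall>p\<in>{-a..a}. dist (h p) (sqrt (1 - p^2 / 2), 0) \<le> K * eps))"
    using slow unfolding slow_manifold_family_def by auto
  have Bs0: "0 \<le> Bs" using Bs[rule_format, of "1/2"] by simp
  define \<tau> where "\<tau> = tanh T"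
  have \<tau>\<nu>: "\<tau> = 1 - \<nu>" using T unfolding \<tau>_def by simp
  define m where "m = (1 - \<tau>^2) / 2"
  have \<tau>b: "0 < \<tau>" "\<tau> < 1" using \<tau>\<nu> \<nu> by auto
  have "\<tau>^2 < 1" using \<tau>b by (simp add: power_less_one_iff)
  then have m0: "0 < m" unfolding m_def by simp
  have m1: "m \<le> 1/2" unfolding m_def by simp
  define L0 where "L0 = Lq0 d1 d3 d4"
  have L00: "0 \<le> L0" unfolding L0_def Lq0_def by simp
  define \<rho> where "\<rho> = min (m / 2) (\<nu> / (T * L0 + 1))"
  have TL: "0 < T * L0 + 1" using T L00 by (simp add: add_nonneg_pos)
  have \<rho>0: "0 < \<rho>" unfolding \<rho>_def using m0 \<nu> TL by simp
  have \<rho>m: "\<rho> < m" unfolding \<rho>_def using m0 by simp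
  have \<rho>1: "\<rho> < 1" using \<rho>m m1 by simp
  have \<rho>\<nu>: "\<rho> \<le> \<nu>"
  proof -
    have "\<nu> / (T * L0 + 1) \<le> \<nu> / 1" using \<nu> TL T L00 by (intro divide_left_mono) auto
    then show ?thesis unfolding \<rho>_def by simp
  qed
  have \<rho>L: "L0 * \<rho> * T \<le> \<nu>"
  proof -
    have "\<rho> \<le> \<nu> / (T * L0 + 1)" unfolding \<rho>_def by simp
    then have "L0 * T * \<rho> \<le> L0 * T * (\<nu> / (T * L0 + 1))" using L00 T by (intro mult_left_mono) auto
    also have "\<dots> = \<nu> * (T * L0 / (T * L0 + 1))" by (simp add: field_simps)
    also have "\<dots> \<le> \<nu> * 1" using TL \<nu> by (intro mult_left_mono) auto
    finally show ?thesis by (simp add: algebra_simps)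
  qed
  define X where "X = 2 * T"
  define B0 where "B0 = \<bar>d1 + d3\<bar> * (1 + X^2) + \<bar>d4\<bar> * (1 + X^4)"
  define Bm where "Bm = B0 + Bs + 1"
  define LB where "LB = \<bar>d1 + d3\<bar> * (2 * X) + \<bar>d4\<bar> * (4 * X^3)"
  define k where "k = 4 + 6 * (2 * T + 1)^2"
  define E where "E = exp (k * T)"
  have E1: "1 \<le> E" unfolding E_def k_def using T by simp
  define Kc where "Kc = 2 * T * ((8 * Bm / m^2) * T)^2 + 4 * \<bar>d1\<bar> * T * Bm"
  define W where "W = \<bar>2/3 * (d1 + d3 + 8/5 * d4)\<bar> + C1 d1 d3 d4 + 1"
  have W1: "1 \<le> W" unfolding W_def using C1_0 by simp
  have Bm0: "0 \<le> Bm" unfolding Bm_def B0_def using Bs0 by simp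
  have Kc0: "0 \<le> Kc" unfolding Kc_def using T Bm0 by simp
  define \<delta> where "\<delta> = min 1 (\<rho>^2 / (2 * E))"
  define \<epsilon>1 where "\<epsilon>1 = min (1/2) (min e0 (min (\<rho>^2 / (2 * (Kc^2 * T * E + 1)))
      (min (\<nu> / (8 * T * (Bs + 1))) (min (\<nu> / (2 * \<bar>K\<bar> + 1)) (min (a / W) (\<nu> / W))))))"
  define \<sigma>1 where "\<sigma>1 = min sg0 (min 1 (\<nu> / (8 * T)))"
  have KE: "0 < Kc^2 * T * E + 1" using T E1 by (simp add: add_nonneg_pos)
  have \<delta>0: "0 < \<delta>" unfolding \<delta>_def using \<rho>0 E1 by simp
  have \<epsilon>10: "0 < \<epsilon>1" unfolding \<epsilon>1_def using e0 \<rho>0 KE \<nu> T Bs0 a0 W1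
    by (simp add: add_nonneg_pos)
  have \<sigma>10: "0 < \<sigma>1" unfolding \<sigma>1_def using sg0 \<nu> T by simp
  have main: "(\<exists>r s psi. orbit_from_Sigma d1 d3 d4 (sigst eps) eps sig s0 T r s psi) \<and>
               (\<forall>r s psi. orbit_from_Sigma d1 d3 d4 (sigst eps) eps sig s0 T r s psi \<longrightarrow>
                  infdist (r T, s T, psi T) (M eps sig) \<le> (C1 d1 d3 d4 + 8) * \<nu> \<and>
                  \<bar>psi T - 2/3 * (d1 + d3 + 8/5 * d4) * eps\<bar>
                     \<le> (C1 d1 d3 d4 + 8) * \<nu> * eps + (C1 d1 d3 d4 + 8) * (eps + \<bar>sig\<bar>) * eps)"
    if eps: "eps \<in> {0<..<\<epsilon>1}" and sig: "\<bar>sig\<bar> < \<sigma>1" and s0: "\<bar>s0 - 1\<bar> < \<delta>" for eps sig s0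
  proof -
    define sst where "sst = sigst eps"
    define \<kappa> where "\<kappa> = eps^2 * sst + sig"
    have e00: "0 < eps" using eps by simp
    have e01: "eps < 1/2 \<and> eps < e0 \<and> eps < \<rho>^2 / (2 * (Kc^2 * T * E + 1)) \<and>
      eps < \<nu> / (8 * T * (Bs + 1)) \<and> eps < \<nu> / (2 * \<bar>K\<bar> + 1) \<and> eps < a / W \<and> eps < \<nu> / W"
      using eps unfolding \<epsilon>1_def by (simp only: greaterThanLessThan_iff min_less_iff_conj)
    have e0': "0 < eps" "eps < 1/2" "eps < e0" "eps \<le> \<rho>^2 / (2 * (Kc^2 * T * E + 1))"
      "eps \<le> \<nu> / (8 * T * (Bs + 1))" "eps \<le> \<nu> / (2 * \<bar>K\<bar> + 1)" "eps \<le> a / W" "eps \<le> \<nu> / W"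
      using e00 e01 by (blast intro: less_imp_le)+
    have sg1: "\<bar>sig\<bar> < sg0 \<and> \<bar>sig\<bar> < 1 \<and> \<bar>sig\<bar> < \<nu> / (8 * T)"
      using sig unfolding \<sigma>1_def by (simp only: min_less_iff_conj)
    have sg': "\<bar>sig\<bar> < sg0" "\<bar>sig\<bar> < 1" "\<bar>sig\<bar> \<le> \<nu> / (8 * T)" using sg1 by (blast intro: less_imp_le)+
    have s01: "\<bar>s0 - 1\<bar> < 1 \<and> \<bar>s0 - 1\<bar> < \<rho>^2 / (2 * E)"
      using s0 unfolding \<delta>_def by (simp only: min_less_iff_conj)
    have s0': "\<bar>s0 - 1\<bar> < 1" "\<bar>s0 - 1\<bar> \<le> \<rho>^2 / (2 * E)" using s01 by (blast intro: less_imp_le)+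
    have sstb: "\<bar>sst\<bar> \<le> Bs" unfolding sst_def using Bs e0' by auto
    have eps2: "eps^2 \<le> eps" using e0' by (simp add: power2_eq_square mult_left_le)
    have \<kappa>1: "\<bar>\<kappa>\<bar> \<le> eps * Bs + \<bar>sig\<bar>"
    proof -
      have "\<bar>eps^2 * sst\<bar> \<le> eps * Bs" using eps2 sstb e0' by (simp add: abs_mult mult_mono)
      then show ?thesis unfolding \<kappa>_def by (smt (verit) abs_triangle_ineq)
    qed
    have \<kappa>2: "\<bar>\<kappa>\<bar> \<le> Bs + 1"
    proof -
      have "eps * Bs \<le> 1 * Bs" using e0' Bs0 by (intro mult_right_mono) auto
      then show ?thesis using \<kappa>1 sg' by linarith
    qed
    have \<kappa>3: "4 * \<bar>\<kappa>\<bar> * T \<le> \<nu>"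
    proof -
      have "eps * Bs \<le> \<nu> / (8 * T * (Bs + 1)) * Bs" using e0' Bs0 by (intro mult_right_mono) auto
      also have "\<dots> \<le> \<nu> / (8 * T)"
      proof -
        have b1: "Bs / (Bs + 1) \<le> 1" using Bs0 by simp
        have "\<nu> / (8 * T * (Bs + 1)) * Bs = \<nu> / (8 * T) * (Bs / (Bs + 1))"
          using T Bs0 by (simp add: field_simps)
        also have "\<dots> \<le> \<nu> / (8 * T) * 1" using b1 \<nu> T by (intro mult_left_mono) auto
        finally show ?thesis by simp
      qed
      finally have "\<bar>\<kappa>\<bar> \<le> \<nu> / (8 * T) + \<nu> / (8 * T)" using \<kappa>1 sg' by linarith
      then have "4 * \<bar>\<kappa>\<bar> * T \<le> 4 * (\<nu> / (8 * T) + \<nu> / (8 * T)) * T" using T by (intro mult_right_mono) auto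
      also have "\<dots> = \<nu>" using T by (simp add: field_simps)
      finally show ?thesis .
    qed
    have BmH: "\<bar>bracket d1 d3 d4 sst eps sig x\<bar> \<le> Bm" if x: "\<bar>x\<bar> \<le> 2 * T" for x
    proof -
      have "\<bar>bracket d1 d3 d4 sst eps sig x\<bar> \<le> B0 + \<bar>\<kappa>\<bar>"
        using bracket_bd[of x X d1 d3 d4 sst eps sig] x unfolding B0_def X_def \<kappa>_def by simp
      then show ?thesis unfolding Bm_def using \<kappa>2 by linarith
    qed
    have LBH: "\<bar>bracket d1 d3 d4 sst eps sig x - bracket d1 d3 d4 sst eps sig y\<bar> \<le> LB * \<bar>x - y\<bar>"
      if "\<bar>x\<bar> \<le> 2 * T" "\<bar>y\<bar> \<le> 2 * T" for x y
      using bracket_lip[of x X y d1 d3 d4 sst eps sig] that unfolding LB_def X_def by simp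
    define c where "c = 2 * T * (\<bar>eps\<bar> * (8 * Bm / m^2) * T)^2 + \<bar>2 * eps^2 * d1\<bar> * (2 * T) * Bm"
    have cK: "c = eps^2 * Kc" unfolding c_def Kc_def using e0'
      by (simp add: power2_eq_square abs_mult algebra_simps)
    have small: "((s0 - 1)^2 + c^2 * T) * exp ((4 + 6 * (2 * T + 1)^2) * T) \<le> \<rho>^2"
    proof -
      have a1: "(s0 - 1)^2 \<le> \<rho>^2 / (2 * E)"
      proof -
        have "(s0 - 1)^2 = \<bar>s0 - 1\<bar> * \<bar>s0 - 1\<bar>" by (simp add: power2_eq_square flip: abs_mult)
        also have "\<dots> \<le> \<bar>s0 - 1\<bar> * 1" using s0' by (intro mult_left_mono) auto
        finally show ?thesis using s0' by simp
      qed
      have a2: "c^2 * T \<le> \<rho>^2 / (2 * E)"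
      proof -
        have "c^2 = eps^4 * Kc^2" unfolding cK by (simp add: power2_eq_square power4_eq_xxxx)
        also have "\<dots> \<le> eps * Kc^2"
        proof (rule mult_right_mono)
          have "eps^4 = eps * eps^3" by (simp add: power4_eq_xxxx power3_eq_cube)
          also have "\<dots> \<le> eps * 1" using e0' by (intro mult_left_mono) (auto simp: power_le_one)
          finally show "eps^4 \<le> eps" by simp
        qed simp
        finally have "c^2 * T \<le> eps * Kc^2 * T" using T by (intro mult_right_mono) auto
        also have "\<dots> \<le> \<rho>^2 / (2 * (Kc^2 * T * E + 1)) * Kc^2 * T"
          using e0' Kc0 T by (intro mult_right_mono) auto
        also have "\<dots> \<le> \<rho>^2 / (2 * E)"
        proof -
          have "Kc^2 * T * E \<le> Kc^2 * T * E + 1" by simp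
          then have "Kc^2 * T * E / (Kc^2 * T * E + 1) \<le> 1" using KE by simp
          then have "\<rho>^2 / 2 * (Kc^2 * T * E / (Kc^2 * T * E + 1)) \<le> \<rho>^2 / 2 * 1"
            by (intro mult_left_mono) auto
          then show ?thesis using KE E1 by (simp add: field_simps)
        qed
        finally show ?thesis .
      qed
      have "((s0 - 1)^2 + c^2 * T) * E \<le> (\<rho>^2 / (2 * E) + \<rho>^2 / (2 * E)) * E"
        using a1 a2 E1 by (intro mult_right_mono) auto
      also have "\<dots> = \<rho>^2" using E1 by (simp add: field_simps)
      finally show ?thesis unfolding E_def k_def .
    qed
    have mle: "m \<le> (1 - tanh T ^ 2) / 2" unfolding m_def \<tau>_def by simp
    have ex: "\<exists>r s psi. orbit_from_Sigma d1 d3 d4 sst eps sig s0 T r s psi"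
      by (rule orbit_exists[OF T(1) m0 mle BmH LBH \<rho>0 \<rho>m \<rho>1 c_def small])
    have all: "infdist (r T, s T, psi T) (M eps sig) \<le> (C1 d1 d3 d4 + 8) * \<nu> \<and>
                  \<bar>psi T - 2/3 * (d1 + d3 + 8/5 * d4) * eps\<bar>
                     \<le> (C1 d1 d3 d4 + 8) * \<nu> * eps + (C1 d1 d3 d4 + 8) * (eps + \<bar>sig\<bar>) * eps"
      if orb: "orbit_from_Sigma d1 d3 d4 sst eps sig s0 T r s psi" for r s psi
    proof -
      have bnds: "\<forall>t\<in>{0..T}. \<bar>r t - tanh t\<bar> \<le> \<rho> \<and> \<bar>s t - (1 - tanh t ^ 2)\<bar> \<le> \<rho>"
        by (rule orbit_bounds[OF orb T(1) m0 mle BmH \<rho>0 \<rho>m \<rho>1 c_def small])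
      have cr: "continuous_on {0..T} r" and cp: "continuous_on {0..T} psi" and r0: "r 0 = 0"
        and H: "hole_sys_sol d1 d3 d4 sst eps sig {0<..T} r s psi"
        using orb unfolding orbit_from_Sigma_def by auto
      have TT: "T \<in> {0..T}" using T by simp
      have rT: "\<bar>r T - tanh T\<bar> \<le> \<rho>" and sT: "\<bar>s T - (1 - tanh T ^ 2)\<bar> \<le> \<rho>" using bnds TT by auto
      define J where "J = integral {0..T} (\<lambda>x. (r x)^2 * bracket d1 d3 d4 sst eps sig (r x))"
      have wi: "((\<lambda>x. 2 * eps * (r x)^2 * bracket d1 d3 d4 sst eps sig (r x)) has_integral ((r T)^2 * psi T)) {0..T}"
        by (rule w_integral[OF H TT cr cp r0])
      have psiT: "(r T)^2 * psi T = 2 * eps * J"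
      proof -
        have "(r T)^2 * psi T = integral {0..T} (\<lambda>x. 2 * eps * (r x)^2 * bracket d1 d3 d4 sst eps sig (r x))"
          using wi by (simp add: integral_unique)
        also have "\<dots> = integral {0..T} (\<lambda>x. (2 * eps) * ((r x)^2 * bracket d1 d3 d4 sst eps sig (r x)))"
          by (simp add: mult.assoc)
        also have "\<dots> = 2 * eps * J" unfolding J_def by (rule integral_mult_right)
        finally show ?thesis .
      qed
      have rb': "\<forall>t\<in>{0..T}. \<bar>r t - tanh t\<bar> \<le> \<rho>" using bnds by blast
      have Je: "\<bar>J - ((d1 + d3) * tanh T ^ 3 / 3 + d4 * (tanh T ^ 3 / 3 + tanh T ^ 5 / 5))\<bar> \<le> 2 * \<nu>"
      proof -
        have "\<bar>J - ((d1 + d3) * tanh T ^ 3 / 3 + d4 * (tanh T ^ 3 / 3 + tanh T ^ 5 / 5))\<bar>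
            \<le> (Lq0 d1 d3 d4 * \<rho> + 4 * \<bar>eps^2 * sst + sig\<bar>) * T"
          unfolding J_def using J_est[OF T(1) cr rb'] \<rho>0 \<rho>1 by simp
        also have "\<dots> = L0 * \<rho> * T + 4 * \<bar>\<kappa>\<bar> * T" unfolding L0_def \<kappa>_def by (simp add: algebra_simps)
        also have "\<dots> \<le> 2 * \<nu>" using \<rho>L \<kappa>3 by linarith
        finally show ?thesis .
      qed
      have \<nu>8: "\<nu> \<le> 1/8" using \<nu> by simp
      have tT: "tanh T = 1 - \<nu>" using T by simp
      have pe: "\<bar>psi T - 2/3 * (d1 + d3 + 8/5 * d4) * eps\<bar> \<le> C1 d1 d3 d4 * \<nu> * eps"
        by (rule psi_final[OF \<nu>(1) \<nu>8 tT rT _ \<rho>\<nu> Je psiT e0'(1)]) (use \<rho>0 in simp)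
      have part2: "\<bar>psi T - 2/3 * (d1 + d3 + 8/5 * d4) * eps\<bar>
                     \<le> (C1 d1 d3 d4 + 8) * \<nu> * eps + (C1 d1 d3 d4 + 8) * (eps + \<bar>sig\<bar>) * eps"
      proof -
        have "C1 d1 d3 d4 * \<nu> * eps \<le> (C1 d1 d3 d4 + 8) * \<nu> * eps"
          using \<nu> e0' by (intro mult_right_mono) auto
        moreover have "0 \<le> (C1 d1 d3 d4 + 8) * (eps + \<bar>sig\<bar>) * eps" using C1_0 e0' by simp
        ultimately show ?thesis using pe by linarith
      qed
      obtain h :: "real \<Rightarrow> real \<times> real" where
        hM: "M eps sig = (\<lambda>p. (fst (h p), snd (h p), p)) ` {-a..a}"
        and hb: "\<forall>p\<in>{-a..a}. dist (h p) (sqrt (1 - p^2 / 2), 0) \<le> K * eps"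
        using man e0' sg' by (meson greaterThanLessThan_iff)
      have pW: "\<bar>psi T\<bar> \<le> eps * W"
      proof -
        have "\<bar>psi T\<bar> \<le> \<bar>2/3 * (d1 + d3 + 8/5 * d4) * eps\<bar> + C1 d1 d3 d4 * \<nu> * eps"
          using pe by linarith
        also have "\<dots> \<le> \<bar>2/3 * (d1 + d3 + 8/5 * d4)\<bar> * eps + C1 d1 d3 d4 * 1 * eps"
          using e0' \<nu> C1_0 by (intro add_mono mult_right_mono mult_left_mono) (auto simp: abs_mult)
        also have "\<dots> \<le> eps * W" unfolding W_def using e0' by (simp add: algebra_simps)
        finally show ?thesis .
      qed
      have pa: "\<bar>psi T\<bar> \<le> a"
      proof -
        have "eps * W \<le> a / W * W" using e0' W1 by (intro mult_right_mono) auto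
        then show ?thesis using pW W1 by simp
      qed
      have pn: "\<bar>psi T\<bar> \<le> \<nu>"
      proof -
        have "eps * W \<le> \<nu> / W * W" using e0' W1 by (intro mult_right_mono) auto
        then show ?thesis using pW W1 by simp
      qed
      have pp: "(psi T)^2 \<le> \<nu>"
      proof -
        have "(psi T)^2 = \<bar>psi T\<bar> * \<bar>psi T\<bar>" by (simp add: power2_eq_square flip: abs_mult)
        also have "\<dots> \<le> \<nu> * 1" using pn \<nu> by (intro mult_mono) auto
        finally show ?thesis by simp
      qed
      have hpb: "dist (h (psi T)) (sqrt (1 - (psi T)^2 / 2), 0) \<le> K * eps"
        using hb pa by (auto simp: abs_le_iff)
      have Ke: "K * eps \<le> \<nu> / 2"
      proof -
        have "K * eps \<le> \<bar>K\<bar> * eps" using e0' by (intro mult_right_mono) auto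
        also have "\<dots> \<le> \<bar>K\<bar> * (\<nu> / (2 * \<bar>K\<bar> + 1))" using e0' by (intro mult_left_mono) auto
        also have "\<dots> \<le> \<nu> / 2" using \<nu> by (simp add: field_simps)
        finally show ?thesis .
      qed
      have Rb: "\<bar>r T - 1\<bar> \<le> 2 * \<nu>" using rT \<rho>\<nu> tT by (simp add: abs_le_iff)
      have Sb: "\<bar>s T\<bar> \<le> 3 * \<nu>"
      proof -
        have e: "1 - tanh T ^ 2 = \<nu> * (2 - \<nu>)" unfolding tT by (simp add: power2_eq_square algebra_simps)
        have "0 \<le> \<nu> * (2 - \<nu>)" using \<nu> by (intro mult_nonneg_nonneg) auto
        moreover have "\<nu> * (2 - \<nu>) \<le> 2 * \<nu>" using \<nu> by (simp add: algebra_simps)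
        ultimately have "0 \<le> 1 - tanh T ^ 2" "1 - tanh T ^ 2 \<le> 2 * \<nu>" unfolding e by auto
        then show ?thesis using sT \<rho>\<nu> by (simp add: abs_le_iff)
      qed
      have "infdist (r T, s T, psi T) (M eps sig) \<le> 7 * \<nu>"
      proof -
        have \<nu>1: "\<nu> \<le> 1" using \<nu> by simp
        show ?thesis unfolding hM by (rule dist_est[where h = h, OF pa hpb Rb Sb pp \<nu>1 Ke])
      qed
      also have "\<dots> \<le> (C1 d1 d3 d4 + 8) * \<nu>" using C1_0 \<nu> by (intro mult_right_mono) auto
      finally show ?thesis using part2 by simp
    qed
    show ?thesis unfolding sst_def[symmetric] using ex all by blast
  qed
  show ?thesis
    apply (rule exI[of _ \<epsilon>1], rule conjI[OF \<epsilon>10])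
    apply (rule exI[of _ \<sigma>1], rule conjI[OF \<sigma>10])
    apply (rule exI[of _ \<delta>], rule conjI[OF \<delta>0])
    by (intro ballI allI impI main)
qed

theorem proposition2p4:
  fixes d1 d3 d4 :: real and sigst :: "real \<Rightarrow> real"
    and M :: "real \<Rightarrow> real \<Rightarrow> (real \<times> real \<times> real) set"
    and e0 sg0 K a :: real
  assumes sigst_bdd: "\<exists>B. \<forall>eps\<in>{0<..<1}. \<bar>sigst eps\<bar> \<le> B"
    and slow: "slow_manifold_family d1 d3 d4 sigst e0 sg0 K a M"
  shows "\<exists>\<nu>0>0. \<exists>C>0. \<forall>\<nu>\<in>{0<..<\<nu>0}. \<forall>T. T > 0 \<and> 1 - tanh T = \<nu> \<longrightarrow>
           (\<exists>\<epsilon>1>0. \<exists>\<sigma>1>0. \<exists>\<delta>>0.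
             \<forall>eps\<in>{0<..<\<epsilon>1}. \<forall>sig. \<bar>sig\<bar> < \<sigma>1 \<longrightarrow> (\<forall>s0. \<bar>s0 - 1\<bar> < \<delta> \<longrightarrow>
               (\<exists>r s psi. orbit_from_Sigma d1 d3 d4 (sigst eps) eps sig s0 T r s psi) \<and>
               (\<forall>r s psi. orbit_from_Sigma d1 d3 d4 (sigst eps) eps sig s0 T r s psi \<longrightarrow>
                  infdist (r T, s T, psi T) (M eps sig) \<le> C * \<nu> \<and>
                  \<bar>psi T - 2/3 * (d1 + d3 + 8/5 * d4) * eps\<bar>
                     \<le> C * \<nu> * eps + C * (eps + \<bar>sig\<bar>) * eps)))"
proof -
  obtain Bs where Bs: "\<forall>eps\<in>{0<..<1}. \<bar>sigst eps\<bar> \<le> Bs" using sigst_bdd by blast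
  have C0: "0 < C1 d1 d3 d4 + 8" using C1_nonneg[of d1 d3 d4] by simp
  show ?thesis
  proof (rule exI[of _ "1/8"], rule conjI, simp, rule exI[of _ "C1 d1 d3 d4 + 8"], rule conjI[OF C0], intro ballI allI impI)
    fix \<nu> T :: real assume \<nu>: "\<nu> \<in> {0<..<1/8}" and T: "T > 0 \<and> 1 - tanh T = \<nu>"
    show "\<exists>\<epsilon>1>0. \<exists>\<sigma>1>0. \<exists>\<delta>>0.
             \<forall>eps\<in>{0<..<\<epsilon>1}. \<forall>sig. \<bar>sig\<bar> < \<sigma>1 \<longrightarrow> (\<forall>s0. \<bar>s0 - 1\<bar> < \<delta> \<longrightarrow>
               (\<exists>r s psi. orbit_from_Sigma d1 d3 d4 (sigst eps) eps sig s0 T r s psi) \<and>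
               (\<forall>r s psi. orbit_from_Sigma d1 d3 d4 (sigst eps) eps sig s0 T r s psi \<longrightarrow>
                  infdist (r T, s T, psi T) (M eps sig) \<le> (C1 d1 d3 d4 + 8) * \<nu> \<and>
                  \<bar>psi T - 2/3 * (d1 + d3 + 8/5 * d4) * eps\<bar>
                     \<le> (C1 d1 d3 d4 + 8) * \<nu> * eps + (C1 d1 d3 d4 + 8) * (eps + \<bar>sig\<bar>) * eps))"
      by (rule main_T[OF Bs slow]) (use \<nu> T in auto)
  qed
qed

end
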